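(* Let $A$ be a coherent commutative ring. Then $A$ is an fqp-ring if and only if $A_P$ is an fqp-ring for each maximal ideal $P$ of $A$.
   Context: A ring is coherent if all its finitely generated ideals are finitely presented. A module $V$ is quasi-projective if the natural map $\mathrm{Hom}(V,V)\to\mathrm{Hom}(V,V/X)$ is surjective for every submodule $X$ of $V$; a ring is an fqp-ring if every finitely generated ideal is quasi-projective. *)

theory Defs
  imports "HOL-Algebra.QuotRing"
begin

definition fg_ideal :: "('a, 'b) ring_scheme \<Rightarrow> 'a set \<Rightarrow> bool" where
  "fg_ideal R I \<longleftrightarrow> (\<exists>S. finite S \<and> S \<subseteq> carrier R \<and> I = Idl\<^bsub>R\<^esub> S)"

text \<open>An ideal I is finitely presented (as an R-module) if there is a surjection
  R^n \<rightarrow> I, given by generators a_0..a_(n-1) of I, whose kernel (the module of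
  relations among the a_i) is finitely generated. Vectors of R^n are functions
  nat \<Rightarrow> 'a, only the components i < n being relevant.\<close>
definition fp_ideal :: "('a, 'b) ring_scheme \<Rightarrow> 'a set \<Rightarrow> bool" where
  "fp_ideal R I \<longleftrightarrow>
    (\<exists>(n::nat) a. (\<forall>i<n. a i \<in> carrier R) \<and>
       I = {(\<Oplus>\<^bsub>R\<^esub> i\<in>{..<n}. r i \<otimes>\<^bsub>R\<^esub> a i) | r. \<forall>i<n. r i \<in> carrier R} \<and>
       (\<exists>(m::nat) g. (\<forall>j<m. \<forall>i<n. g j i \<in> carrier R) \<and>
          (\<forall>j<m. (\<Oplus>\<^bsub>R\<^esub> i\<in>{..<n}. g j i \<otimes>\<^bsub>R\<^esub> a i) = \<zero>\<^bsub>R\<^esub>) \<and>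
          (\<forall>r. (\<forall>i<n. r i \<in> carrier R) \<and> (\<Oplus>\<^bsub>R\<^esub> i\<in>{..<n}. r i \<otimes>\<^bsub>R\<^esub> a i) = \<zero>\<^bsub>R\<^esub> \<longrightarrow>
             (\<exists>c. (\<forall>j<m. c j \<in> carrier R) \<and>
                  (\<forall>i<n. r i = (\<Oplus>\<^bsub>R\<^esub> j\<in>{..<m}. c j \<otimes>\<^bsub>R\<^esub> g j i))))))"

definition coherent_ring :: "('a, 'b) ring_scheme \<Rightarrow> bool" where
  "coherent_ring R \<longleftrightarrow> (\<forall>I. ideal I R \<and> fg_ideal R I \<longrightarrow> fp_ideal R I)"

definition submod :: "('a, 'b) ring_scheme \<Rightarrow> 'a set \<Rightarrow> 'a set \<Rightarrow> bool" where
  "submod R V N \<longleftrightarrow> N \<subseteq> V \<and> \<zero>\<^bsub>R\<^esub> \<in> N \<and>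
     (\<forall>x\<in>N. \<forall>y\<in>N. x \<oplus>\<^bsub>R\<^esub> y \<in> N) \<and> (\<forall>x\<in>N. a_inv R x \<in> N) \<and>
     (\<forall>r\<in>carrier R. \<forall>x\<in>N. r \<otimes>\<^bsub>R\<^esub> x \<in> N)"

definition lin_map :: "('a, 'b) ring_scheme \<Rightarrow> 'a set \<Rightarrow> 'a set \<Rightarrow> ('a \<Rightarrow> 'a) \<Rightarrow> bool" where
  "lin_map R V W f \<longleftrightarrow> (\<forall>v\<in>V. f v \<in> W) \<and>
     (\<forall>u\<in>V. \<forall>v\<in>V. f (u \<oplus>\<^bsub>R\<^esub> v) = f u \<oplus>\<^bsub>R\<^esub> f v) \<and>
     (\<forall>r\<in>carrier R. \<forall>v\<in>V. f (r \<otimes>\<^bsub>R\<^esub> v) = r \<otimes>\<^bsub>R\<^esub> f v)"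

text \<open>Quotient module V/N: elements are the cosets N + v, addition is set addition,
  and r \<cdot> (N + v) = N + r(N + v) = N + rv.\<close>
definition quot_carrier :: "('a, 'b) ring_scheme \<Rightarrow> 'a set \<Rightarrow> 'a set \<Rightarrow> 'a set set" where
  "quot_carrier R V N = {N +>\<^bsub>R\<^esub> v | v. v \<in> V}"

definition quot_smult :: "('a, 'b) ring_scheme \<Rightarrow> 'a set \<Rightarrow> 'a \<Rightarrow> 'a set \<Rightarrow> 'a set" where
  "quot_smult R N r C = N <+>\<^bsub>R\<^esub> ((\<lambda>c. r \<otimes>\<^bsub>R\<^esub> c) ` C)"

definition lin_map_quot :: "('a, 'b) ring_scheme \<Rightarrow> 'a set \<Rightarrow> 'a set \<Rightarrow> ('a \<Rightarrow> 'a set) \<Rightarrow> bool" where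
  "lin_map_quot R V N g \<longleftrightarrow> (\<forall>v\<in>V. g v \<in> quot_carrier R V N) \<and>
     (\<forall>u\<in>V. \<forall>v\<in>V. g (u \<oplus>\<^bsub>R\<^esub> v) = g u <+>\<^bsub>R\<^esub> g v) \<and>
     (\<forall>r\<in>carrier R. \<forall>v\<in>V. g (r \<otimes>\<^bsub>R\<^esub> v) = quot_smult R N r (g v))"

definition quasi_projective :: "('a, 'b) ring_scheme \<Rightarrow> 'a set \<Rightarrow> bool" where
  "quasi_projective R V \<longleftrightarrow>
    (\<forall>N g. submod R V N \<and> lin_map_quot R V N g \<longrightarrow>
       (\<exists>f. lin_map R V V f \<and> (\<forall>v\<in>V. N +>\<^bsub>R\<^esub> f v = g v)))"

definition fqp_ring :: "('a, 'b) ring_scheme \<Rightarrow> bool" where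
  "fqp_ring R \<longleftrightarrow> (\<forall>I. ideal I R \<and> fg_ideal R I \<longrightarrow> quasi_projective R I)"

text \<open>Fractions a/s with s \<notin> P; (a,s) ~ (b,t) iff u(at - bs) = 0 for some u \<notin> P.\<close>
definition loc_cls :: "('a, 'b) ring_scheme \<Rightarrow> 'a set \<Rightarrow> 'a \<times> 'a \<Rightarrow> ('a \<times> 'a) set" where
  "loc_cls R P as = {(b, t). b \<in> carrier R \<and> t \<in> carrier R - P \<and>
      (\<exists>u\<in>carrier R - P. u \<otimes>\<^bsub>R\<^esub> ((fst as \<otimes>\<^bsub>R\<^esub> t) \<ominus>\<^bsub>R\<^esub> (b \<otimes>\<^bsub>R\<^esub> snd as)) = \<zero>\<^bsub>R\<^esub>)}"

definition loc_mult :: "('a, 'b) ring_scheme \<Rightarrow> 'a set \<Rightarrow> ('a \<times> 'a) set \<Rightarrow> ('a \<times> 'a) set \<Rightarrow> ('a \<times> 'a) set" where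
  "loc_mult R P C D = \<Union>{loc_cls R P (a \<otimes>\<^bsub>R\<^esub> b, s \<otimes>\<^bsub>R\<^esub> t) | a s b t. (a, s) \<in> C \<and> (b, t) \<in> D}"

definition loc_add :: "('a, 'b) ring_scheme \<Rightarrow> 'a set \<Rightarrow> ('a \<times> 'a) set \<Rightarrow> ('a \<times> 'a) set \<Rightarrow> ('a \<times> 'a) set" where
  "loc_add R P C D = \<Union>{loc_cls R P ((a \<otimes>\<^bsub>R\<^esub> t) \<oplus>\<^bsub>R\<^esub> (b \<otimes>\<^bsub>R\<^esub> s), s \<otimes>\<^bsub>R\<^esub> t) | a s b t.
                         (a, s) \<in> C \<and> (b, t) \<in> D}"

definition localization :: "('a, 'b) ring_scheme \<Rightarrow> 'a set \<Rightarrow> ('a \<times> 'a) set ring" where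
  "localization R P =
    \<lparr>carrier = {loc_cls R P (a, s) | a s. a \<in> carrier R \<and> s \<in> carrier R - P},
     mult = loc_mult R P,
     one = loc_cls R P (\<one>\<^bsub>R\<^esub>, \<one>\<^bsub>R\<^esub>),
     zero = loc_cls R P (\<zero>\<^bsub>R\<^esub>, \<one>\<^bsub>R\<^esub>),
     add = loc_add R P\<rparr>"

end

theory Submission
  imports Defs
begin

definition span :: "('a,'b) ring_scheme \<Rightarrow> nat \<Rightarrow> (nat \<Rightarrow> 'a) \<Rightarrow> 'a set" where
 "span R n a = {(\<Oplus>\<^bsub>R\<^esub> i\<in>{..<n}. r i \<otimes>\<^bsub>R\<^esub> a i) | r. \<forall>i<n. r i \<in> carrier R}"

definition isrel :: "('a,'b) ring_scheme \<Rightarrow> nat \<Rightarrow> (nat \<Rightarrow> 'a) \<Rightarrow> (nat \<Rightarrow> 'a) \<Rightarrow> bool" where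
 "isrel R n a r \<longleftrightarrow> (\<forall>i<n. r i \<in> carrier R) \<and> (\<Oplus>\<^bsub>R\<^esub> i\<in>{..<n}. r i \<otimes>\<^bsub>R\<^esub> a i) = \<zero>\<^bsub>R\<^esub>"

context cring begin

lemma fsum_Suc:
  assumes "\<And>i. i < Suc n \<Longrightarrow> f i \<in> carrier R"
  shows "(\<Oplus>i\<in>{..<Suc n}. f i) = f n \<oplus> (\<Oplus>i\<in>{..<n}. f i)"
  using assms by (simp add: lessThan_Suc Pi_def)

lemma fsum_closed:
  fixes n :: nat
  assumes "\<And>i. i < n \<Longrightarrow> f i \<in> carrier R"
  shows "(\<Oplus>i\<in>{..<n}. f i) \<in> carrier R"
  using assms by (intro finsum_closed) auto

lemma fsum_in_set:
  fixes n :: nat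
  assumes "\<zero> \<in> N" "\<And>x y. x \<in> N \<Longrightarrow> y \<in> N \<Longrightarrow> x \<oplus> y \<in> N" "N \<subseteq> carrier R"
     "\<And>i. i < n \<Longrightarrow> f i \<in> N"
  shows "(\<Oplus>i\<in>{..<n}. f i) \<in> N"
  using assms(4)
proof (induction n)
  case 0 then show ?case using assms by simp
next
  case (Suc n)
  have "(\<Oplus>i\<in>{..<Suc n}. f i) = f n \<oplus> (\<Oplus>i\<in>{..<n}. f i)"
    by (rule fsum_Suc) (use Suc.prems assms(3) in auto)
  then show ?case using Suc assms by simp
qed

lemma fsum_cong:
  fixes n :: nat
  assumes "\<And>i. i < n \<Longrightarrow> f i = g i" "\<And>i. i < n \<Longrightarrow> g i \<in> carrier R"
  shows "(\<Oplus>i\<in>{..<n}. f i) = (\<Oplus>i\<in>{..<n}. g i)"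
  using assms by (intro finsum_cong') auto

lemma fsum_add:
  fixes n :: nat
  assumes "\<And>i. i < n \<Longrightarrow> f i \<in> carrier R" "\<And>i. i < n \<Longrightarrow> g i \<in> carrier R"
  shows "(\<Oplus>i\<in>{..<n}. f i \<oplus> g i) = (\<Oplus>i\<in>{..<n}. f i) \<oplus> (\<Oplus>i\<in>{..<n}. g i)"
  using assms by (intro finsum_addf) auto

lemma fsum_smult:
  fixes n :: nat
  assumes "\<And>i. i < n \<Longrightarrow> f i \<in> carrier R" "c \<in> carrier R"
  shows "(\<Oplus>i\<in>{..<n}. c \<otimes> f i) = c \<otimes> (\<Oplus>i\<in>{..<n}. f i)"
  using assms by (intro finsum_rdistr[symmetric]) auto

lemma fsum_neg:
  fixes n :: nat
  assumes "\<And>i. i < n \<Longrightarrow> f i \<in> carrier R"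
  shows "(\<Oplus>i\<in>{..<n}. \<ominus> f i) = \<ominus> (\<Oplus>i\<in>{..<n}. f i)"
proof -
  have "(\<Oplus>i\<in>{..<n}. \<ominus> f i) = (\<Oplus>i\<in>{..<n}. \<ominus>\<one> \<otimes> f i)"
    using assms by (intro fsum_cong) (auto simp: l_minus)
  also have "\<dots> = \<ominus>\<one> \<otimes> (\<Oplus>i\<in>{..<n}. f i)"
    using assms by (intro fsum_smult) auto
  also have "\<dots> = \<ominus> (\<Oplus>i\<in>{..<n}. f i)"
    using fsum_closed[OF assms] by (simp add: l_minus)
  finally show ?thesis .
qed

lemma fsum_minus:
  fixes n :: nat
  assumes "\<And>i. i < n \<Longrightarrow> f i \<in> carrier R" "\<And>i. i < n \<Longrightarrow> g i \<in> carrier R"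
  shows "(\<Oplus>i\<in>{..<n}. f i \<ominus> g i) = (\<Oplus>i\<in>{..<n}. f i) \<ominus> (\<Oplus>i\<in>{..<n}. g i)"
proof -
  have "(\<Oplus>i\<in>{..<n}. f i \<ominus> g i) = (\<Oplus>i\<in>{..<n}. f i \<oplus> \<ominus> g i)"
    using assms by (intro fsum_cong) (auto simp: a_minus_def)
  also have "\<dots> = (\<Oplus>i\<in>{..<n}. f i) \<oplus> (\<Oplus>i\<in>{..<n}. \<ominus> g i)"
    using assms by (intro fsum_add) auto
  also have "\<dots> = (\<Oplus>i\<in>{..<n}. f i) \<ominus> (\<Oplus>i\<in>{..<n}. g i)"
    using assms by (simp add: fsum_neg a_minus_def)
  finally show ?thesis .
qed

lemma fsum_zero: "(\<Oplus>i\<in>{..<n}. \<zero>) = \<zero>"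
  by simp

lemma fsum_delta:
  fixes n :: nat
  assumes "k < n" "\<And>i. i < n \<Longrightarrow> f i \<in> carrier R"
  shows "(\<Oplus>i\<in>{..<n}. (if i = k then \<one> else \<zero>) \<otimes> f i) = f k"
proof -
  have "(\<Oplus>i\<in>{..<n}. (if i = k then \<one> else \<zero>) \<otimes> f i) = (\<Oplus>i\<in>{..<n}. if k = i then f i else \<zero>)"
    using assms by (intro fsum_cong) auto
  also have "\<dots> = f k"
    using assms by (intro add.finprod_singleton) auto
  finally show ?thesis .
qed

lemma ideal_by_closure:
  assumes "I \<subseteq> carrier R" "\<zero> \<in> I" "\<And>x y. x \<in> I \<Longrightarrow> y \<in> I \<Longrightarrow> x \<oplus> y \<in> I"
    "\<And>r x. r \<in> carrier R \<Longrightarrow> x \<in> I \<Longrightarrow> r \<otimes> x \<in> I"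
  shows "ideal I R"
proof (rule idealI)
  show "ring R" by (rule ring_axioms)
  show "subgroup I (add_monoid R)"
  proof
    show "I \<subseteq> carrier (add_monoid R)" using assms by simp
    show "x \<otimes>\<^bsub>add_monoid R\<^esub> y \<in> I" if "x \<in> I" "y \<in> I" for x y using assms that by simp
    show "\<one>\<^bsub>add_monoid R\<^esub> \<in> I" using assms by simp
    show "inv\<^bsub>add_monoid R\<^esub> x \<in> I" if "x \<in> I" for x
    proof -
      have "x \<in> carrier R" using that assms by auto
      then have "inv\<^bsub>add_monoid R\<^esub> x = \<ominus>\<one> \<otimes> x" by (simp add: a_inv_def[symmetric] l_minus)
      then show ?thesis using assms that by simp
    qed
  qed
  show "x \<otimes> a \<in> I" if "a \<in> I" "x \<in> carrier R" for a x using assms that by simp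
  show "a \<otimes> x \<in> I" if "a \<in> I" "x \<in> carrier R" for a x
    using assms that m_comm[of a x] by auto
qed

lemma span_carrier:
  assumes "\<And>i. i < n \<Longrightarrow> a i \<in> carrier R"
  shows "span R n a \<subseteq> carrier R"
  using assms unfolding span_def by (auto intro!: fsum_closed)

lemma span_add:
  fixes n :: nat
  assumes "\<And>i. i < n \<Longrightarrow> a i \<in> carrier R" "\<forall>i<n. r i \<in> carrier R" "\<forall>i<n. r' i \<in> carrier R"
  shows "(\<Oplus>i\<in>{..<n}. (r i \<oplus> r' i) \<otimes> a i) = (\<Oplus>i\<in>{..<n}. r i \<otimes> a i) \<oplus> (\<Oplus>i\<in>{..<n}. r' i \<otimes> a i)"
proof -
  have "(\<Oplus>i\<in>{..<n}. (r i \<oplus> r' i) \<otimes> a i) = (\<Oplus>i\<in>{..<n}. r i \<otimes> a i \<oplus> r' i \<otimes> a i)"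
    using assms by (intro fsum_cong) (auto simp: l_distr)
  also have "\<dots> = (\<Oplus>i\<in>{..<n}. r i \<otimes> a i) \<oplus> (\<Oplus>i\<in>{..<n}. r' i \<otimes> a i)"
    using assms by (intro fsum_add) auto
  finally show ?thesis .
qed

lemma span_minus:
  fixes n :: nat
  assumes "\<And>i. i < n \<Longrightarrow> a i \<in> carrier R" "\<forall>i<n. r i \<in> carrier R" "\<forall>i<n. r' i \<in> carrier R"
  shows "(\<Oplus>i\<in>{..<n}. (r i \<ominus> r' i) \<otimes> a i) = (\<Oplus>i\<in>{..<n}. r i \<otimes> a i) \<ominus> (\<Oplus>i\<in>{..<n}. r' i \<otimes> a i)"
proof -
  have "(\<Oplus>i\<in>{..<n}. (r i \<ominus> r' i) \<otimes> a i) = (\<Oplus>i\<in>{..<n}. r i \<otimes> a i \<ominus> r' i \<otimes> a i)"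
    using assms by (intro fsum_cong) (auto, algebra)
  also have "\<dots> = (\<Oplus>i\<in>{..<n}. r i \<otimes> a i) \<ominus> (\<Oplus>i\<in>{..<n}. r' i \<otimes> a i)"
    using assms by (intro fsum_minus) auto
  finally show ?thesis .
qed

lemma span_smult:
  fixes n :: nat
  assumes "\<And>i. i < n \<Longrightarrow> a i \<in> carrier R" "\<forall>i<n. r i \<in> carrier R" "c \<in> carrier R"
  shows "(\<Oplus>i\<in>{..<n}. (c \<otimes> r i) \<otimes> a i) = c \<otimes> (\<Oplus>i\<in>{..<n}. r i \<otimes> a i)"
proof -
  have "(\<Oplus>i\<in>{..<n}. (c \<otimes> r i) \<otimes> a i) = (\<Oplus>i\<in>{..<n}. c \<otimes> (r i \<otimes> a i))"
    using assms by (intro fsum_cong) (auto simp: m_assoc)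
  also have "\<dots> = c \<otimes> (\<Oplus>i\<in>{..<n}. r i \<otimes> a i)"
    using assms by (intro fsum_smult) auto
  finally show ?thesis .
qed

lemma span_E:
  assumes "x \<in> span R n a"
  obtains r where "\<forall>i<n. r i \<in> carrier R" "x = (\<Oplus>i\<in>{..<n}. r i \<otimes> a i)"
  using assms unfolding span_def by blast

lemma span_I:
  assumes "\<forall>i<n. r i \<in> carrier R" "x = (\<Oplus>i\<in>{..<n}. r i \<otimes> a i)"
  shows "x \<in> span R n a"
  using assms unfolding span_def by blast

lemma span_ideal:
  assumes "\<And>i. i < n \<Longrightarrow> a i \<in> carrier R"
  shows "ideal (span R n a) R"
proof (rule ideal_by_closure)
  show "span R n a \<subseteq> carrier R" using span_carrier assms .
  show "\<zero> \<in> span R n a"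
    by (rule span_I[where r="\<lambda>i. \<zero>"]) (use assms fsum_cong[of n "\<lambda>i. \<zero> \<otimes> a i" "\<lambda>i. \<zero>"] in auto)
  show "x \<oplus> y \<in> span R n a" if hx: "x \<in> span R n a" and hy: "y \<in> span R n a" for x y
  proof -
    obtain r where r: "\<forall>i<n. r i \<in> carrier R" "x = (\<Oplus>i\<in>{..<n}. r i \<otimes> a i)"
      using hx by (rule span_E)
    obtain r' where r': "\<forall>i<n. r' i \<in> carrier R" "y = (\<Oplus>i\<in>{..<n}. r' i \<otimes> a i)"
      using hy by (rule span_E)
    show ?thesis
      by (rule span_I[where r="\<lambda>i. r i \<oplus> r' i"]) (use r r' span_add[OF assms] in auto)
  qed
  show "c \<otimes> x \<in> span R n a" if hc: "c \<in> carrier R" and hx: "x \<in> span R n a" for c x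
  proof -
    obtain r where r: "\<forall>i<n. r i \<in> carrier R" "x = (\<Oplus>i\<in>{..<n}. r i \<otimes> a i)"
      using hx by (rule span_E)
    show ?thesis
      by (rule span_I[where r="\<lambda>i. c \<otimes> r i"]) (use r hc span_smult[OF assms] in auto)
  qed
qed

lemma span_gen:
  assumes "\<And>i. i < n \<Longrightarrow> a i \<in> carrier R" "k < n"
  shows "a k \<in> span R n a"
  unfolding span_def
  by (intro CollectI exI[of _ "\<lambda>i. if i = k then \<one> else \<zero>"] conjI)
     (use fsum_delta[of k n a] assms in auto)

lemma span_eq_Idl:
  assumes "\<And>i. i < n \<Longrightarrow> a i \<in> carrier R"
  shows "span R n a = Idl (a ` {..<n})"
proof
  show "Idl (a ` {..<n}) \<subseteq> span R n a"
    by (rule genideal_minimal) (use span_ideal[OF assms] span_gen[OF assms] in auto)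
  show "span R n a \<subseteq> Idl (a ` {..<n})"
  proof
    fix x assume "x \<in> span R n a"
    then obtain r where r: "\<forall>i<n. r i \<in> carrier R" "x = (\<Oplus>i\<in>{..<n}. r i \<otimes> a i)"
      unfolding span_def by auto
    have I: "ideal (Idl (a ` {..<n})) R" using assms by (intro genideal_ideal) auto
    have sub: "a ` {..<n} \<subseteq> Idl (a ` {..<n})" using assms by (intro genideal_self) auto
    show "x \<in> Idl (a ` {..<n})" unfolding r(2)
    proof (rule fsum_in_set)
      show "\<zero> \<in> Idl (a ` {..<n})" using I by (simp add: additive_subgroup.zero_closed ideal.axioms(1))
      show "x \<oplus> y \<in> Idl (a ` {..<n})" if "x \<in> Idl (a ` {..<n})" "y \<in> Idl (a ` {..<n})" for x y
        using I that by (simp add: additive_subgroup.a_closed ideal.axioms(1))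
      show "Idl (a ` {..<n}) \<subseteq> carrier R" using I by (simp add: ideal.axioms(1) additive_subgroup.a_subset)
      show "r i \<otimes> a i \<in> Idl (a ` {..<n})" if "i < n" for i
        using I sub that r(1) by (simp add: ideal.I_l_closed image_subset_iff)
    qed
  qed
qed

end

context cring begin

lemma submod_carrier: "submod R V N \<Longrightarrow> V \<subseteq> carrier R \<Longrightarrow> N \<subseteq> carrier R"
  unfolding submod_def by auto

lemma r_coset_eq: "N +> x = (\<Union>h\<in>N. {h \<oplus> x})"
  by (simp add: a_r_coset_def r_coset_def)

lemma set_add_eq: "set_add R A B = (\<Union>h\<in>A. \<Union>k\<in>B. {h \<oplus> k})"
  by (simp add: set_add_def set_mult_def)

lemma minus_zero_eq:
  assumes "x \<in> carrier R" "y \<in> carrier R" "x \<ominus> y = \<zero>" shows "x = y"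
proof -
  have "x = (x \<ominus> y) \<oplus> y" using assms(1,2) by algebra
  then show ?thesis using assms by simp
qed

context
  fixes V N
  assumes sm: "submod R V N" and Vc: "V \<subseteq> carrier R"
begin

lemma Nc: "N \<subseteq> carrier R" using submod_carrier[OF sm Vc] .
lemma N0: "\<zero> \<in> N" using sm unfolding submod_def by auto
lemma Nadd: "x \<in> N \<Longrightarrow> y \<in> N \<Longrightarrow> x \<oplus> y \<in> N" using sm unfolding submod_def by auto
lemma Nneg: "x \<in> N \<Longrightarrow> \<ominus> x \<in> N" using sm unfolding submod_def by auto
lemma Nsmult: "r \<in> carrier R \<Longrightarrow> x \<in> N \<Longrightarrow> r \<otimes> x \<in> N" using sm unfolding submod_def by auto
lemma Nminus: "x \<in> N \<Longrightarrow> y \<in> N \<Longrightarrow> x \<ominus> y \<in> N" by (simp add: a_minus_def Nadd Nneg)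

lemma coset_eq_iff:
  assumes "x \<in> carrier R" "y \<in> carrier R"
  shows "(N +> x = N +> y) \<longleftrightarrow> x \<ominus> y \<in> N"
proof
  assume e: "N +> x = N +> y"
  have "x \<in> N +> x" unfolding r_coset_eq using N0 assms by force
  then have "x \<in> N +> y" using e by simp
  then obtain h where h: "h \<in> N" "x = h \<oplus> y" unfolding r_coset_eq by auto
  have hc: "h \<in> carrier R" using h Nc by auto
  have "x \<ominus> y = h" unfolding h(2) using hc assms by algebra
  then show "x \<ominus> y \<in> N" using h by simp
next
  assume d: "x \<ominus> y \<in> N"
  show "N +> x = N +> y"
  proof
    show "N +> x \<subseteq> N +> y"
    proof
      fix w assume "w \<in> N +> x"
      then obtain h where h: "h \<in> N" "w = h \<oplus> x" unfolding r_coset_eq by auto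
      have hc: "h \<in> carrier R" using h Nc by auto
      have "w = (h \<oplus> (x \<ominus> y)) \<oplus> y" unfolding h(2) using hc assms by algebra
      moreover have "h \<oplus> (x \<ominus> y) \<in> N" using h d Nadd by auto
      ultimately show "w \<in> N +> y" unfolding r_coset_eq by auto
    qed
  next
    have d': "y \<ominus> x \<in> N"
    proof -
      have "y \<ominus> x = \<ominus> (x \<ominus> y)" using assms by algebra
      then show ?thesis using Nneg d by simp
    qed
    show "N +> y \<subseteq> N +> x"
    proof
      fix w assume "w \<in> N +> y"
      then obtain h where h: "h \<in> N" "w = h \<oplus> y" unfolding r_coset_eq by auto
      have hc: "h \<in> carrier R" using h Nc by auto
      have "w = (h \<oplus> (y \<ominus> x)) \<oplus> x" unfolding h(2) using hc assms by algebra
      moreover have "h \<oplus> (y \<ominus> x) \<in> N" using h d' Nadd by auto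
      ultimately show "w \<in> N +> x" unfolding r_coset_eq by auto
    qed
  qed
qed

lemma coset_sum:
  assumes "x \<in> carrier R" "y \<in> carrier R"
  shows "set_add R (N +> x) (N +> y) = N +> (x \<oplus> y)"
proof
  show "set_add R (N +> x) (N +> y) \<subseteq> N +> (x \<oplus> y)"
  proof
    fix w assume "w \<in> set_add R (N +> x) (N +> y)"
    then obtain h k where hk: "h \<in> N" "k \<in> N" "w = (h \<oplus> x) \<oplus> (k \<oplus> y)"
      unfolding set_add_eq r_coset_eq by auto
    have hc: "h \<in> carrier R" "k \<in> carrier R" using hk Nc by auto
    have "w = (h \<oplus> k) \<oplus> (x \<oplus> y)" unfolding hk(3) using hc assms by algebra
    then show "w \<in> N +> (x \<oplus> y)" using hk Nadd unfolding r_coset_eq by auto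
  qed
  show "N +> (x \<oplus> y) \<subseteq> set_add R (N +> x) (N +> y)"
  proof
    fix w assume "w \<in> N +> (x \<oplus> y)"
    then obtain h where h: "h \<in> N" "w = h \<oplus> (x \<oplus> y)" unfolding r_coset_eq by auto
    have hc: "h \<in> carrier R" using h Nc by auto
    have "w = (h \<oplus> x) \<oplus> (\<zero> \<oplus> y)" unfolding h(2) using hc assms by algebra
    then show "w \<in> set_add R (N +> x) (N +> y)" using h N0 unfolding set_add_eq r_coset_eq by blast
  qed
qed

lemma coset_smult:
  assumes "x \<in> carrier R" "c \<in> carrier R"
  shows "quot_smult R N c (N +> x) = N +> (c \<otimes> x)"
proof
  show "quot_smult R N c (N +> x) \<subseteq> N +> (c \<otimes> x)"
  proof
    fix w assume "w \<in> quot_smult R N c (N +> x)"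
    then obtain h k where hk: "h \<in> N" "k \<in> N" "w = h \<oplus> c \<otimes> (k \<oplus> x)"
      unfolding quot_smult_def set_add_eq r_coset_eq by auto
    have hc: "h \<in> carrier R" "k \<in> carrier R" using hk Nc by auto
    have "w = (h \<oplus> c \<otimes> k) \<oplus> c \<otimes> x" unfolding hk(3) using hc assms by algebra
    then show "w \<in> N +> (c \<otimes> x)" using hk Nadd Nsmult assms unfolding r_coset_eq by auto
  qed
  show "N +> (c \<otimes> x) \<subseteq> quot_smult R N c (N +> x)"
  proof
    fix w assume "w \<in> N +> (c \<otimes> x)"
    then obtain h where h: "h \<in> N" "w = h \<oplus> c \<otimes> x" unfolding r_coset_eq by auto
    have hc: "h \<in> carrier R" using h Nc by auto
    have "w = h \<oplus> c \<otimes> (\<zero> \<oplus> x)" unfolding h(2) using hc assms by simp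
    then show "w \<in> quot_smult R N c (N +> x)" using h N0
      unfolding quot_smult_def set_add_eq r_coset_eq by blast
  qed
qed

end

end

definition rep :: "('a,'b) ring_scheme \<Rightarrow> nat \<Rightarrow> (nat \<Rightarrow> 'a) \<Rightarrow> 'a \<Rightarrow> (nat \<Rightarrow> 'a)" where
  "rep R n a v = (SOME r. (\<forall>i<n. r i \<in> carrier R) \<and> v = (\<Oplus>\<^bsub>R\<^esub> i\<in>{..<n}. r i \<otimes>\<^bsub>R\<^esub> a i))"

context cring begin

lemma well_def:
  fixes n :: nat
  assumes "\<forall>r. isrel R n a r \<longrightarrow> (\<Oplus>i\<in>{..<n}. r i \<otimes> z i) \<in> N"
    and a: "\<And>i. i < n \<Longrightarrow> a i \<in> carrier R"
    and z: "\<And>i. i < n \<Longrightarrow> z i \<in> carrier R"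
    and r: "\<forall>i<n. r i \<in> carrier R" and r': "\<forall>i<n. r' i \<in> carrier R"
    and e: "(\<Oplus>i\<in>{..<n}. r i \<otimes> a i) = (\<Oplus>i\<in>{..<n}. r' i \<otimes> a i)"
  shows "(\<Oplus>i\<in>{..<n}. r i \<otimes> z i) \<ominus> (\<Oplus>i\<in>{..<n}. r' i \<otimes> z i) \<in> N"
proof -
  have "isrel R n a (\<lambda>i. r i \<ominus> r' i)"
    unfolding isrel_def using span_minus[OF a r r'] e r r' a
    by (auto simp: fsum_closed r_neg a_minus_def)
  then have "(\<Oplus>i\<in>{..<n}. (r i \<ominus> r' i) \<otimes> z i) \<in> N" using assms(1) by blast
  then show ?thesis using span_minus[OF z r r'] by simp
qed

context
  fixes n :: nat and a :: "nat \<Rightarrow> 'a" and V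
  assumes a: "\<And>i. i < n \<Longrightarrow> a i \<in> carrier R" and V: "V = span R n a"
begin

lemma Vc: "V \<subseteq> carrier R" using span_carrier[OF a] V by simp
lemma Videal: "ideal V R" using span_ideal[OF a] V by simp
lemma aV: "i < n \<Longrightarrow> a i \<in> V" using span_gen[OF a] V by simp
lemma V0: "\<zero> \<in> V" using Videal by (simp add: additive_subgroup.zero_closed ideal.axioms(1))
lemma Vadd: "x \<in> V \<Longrightarrow> y \<in> V \<Longrightarrow> x \<oplus> y \<in> V"
  using Videal by (simp add: additive_subgroup.a_closed ideal.axioms(1))
lemma Vsmult: "c \<in> carrier R \<Longrightarrow> x \<in> V \<Longrightarrow> c \<otimes> x \<in> V"
  using Videal by (simp add: ideal.I_l_closed)

lemma lc_in_V:
  assumes "\<forall>i<n. r i \<in> carrier R" "\<forall>i<n. y i \<in> V"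
  shows "(\<Oplus>i\<in>{..<n}. r i \<otimes> y i) \<in> V"
  by (rule fsum_in_set) (use V0 Vadd Vc Vsmult assms in auto)

lemma rep_ok:
  assumes "v \<in> V"
  shows "\<forall>i<n. rep R n a v i \<in> carrier R" "v = (\<Oplus>i\<in>{..<n}. rep R n a v i \<otimes> a i)"
proof -
  have ex: "\<exists>r. (\<forall>i<n. r i \<in> carrier R) \<and> v = (\<Oplus>i\<in>{..<n}. r i \<otimes> a i)"
    using assms V span_E by metis
  show "\<forall>i<n. rep R n a v i \<in> carrier R" "v = (\<Oplus>i\<in>{..<n}. rep R n a v i \<otimes> a i)"
    using someI_ex[OF ex] unfolding rep_def by auto
qed

lemma lin_sum:
  assumes f: "lin_map R V V f" and r: "\<forall>i<n. r i \<in> carrier R" and k: "k \<le> n"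
  shows "f (\<Oplus>i\<in>{..<k}. r i \<otimes> a i) = (\<Oplus>i\<in>{..<k}. r i \<otimes> f (a i))"
  using k
proof (induction k)
  case 0
  have h: "f (\<zero> \<otimes> \<zero>) = \<zero> \<otimes> f \<zero>" using f V0 unfolding lin_map_def by blast
  have "f \<zero> \<in> carrier R" using f V0 Vc unfolding lin_map_def by auto
  then show ?case using h by simp
next
  case (Suc k)
  have fa: "\<And>i. i < n \<Longrightarrow> f (a i) \<in> V" using f aV unfolding lin_map_def by auto
  have s1: "(\<Oplus>i\<in>{..<Suc k}. r i \<otimes> a i) = r k \<otimes> a k \<oplus> (\<Oplus>i\<in>{..<k}. r i \<otimes> a i)"
    using Suc.prems r a by (intro fsum_Suc) auto
  have s2: "(\<Oplus>i\<in>{..<Suc k}. r i \<otimes> f (a i)) = r k \<otimes> f (a k) \<oplus> (\<Oplus>i\<in>{..<k}. r i \<otimes> f (a i))"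
    using Suc.prems r fa Vc by (intro fsum_Suc) (auto intro!: m_closed)
  have inV: "(\<Oplus>i\<in>{..<k}. r i \<otimes> a i) \<in> V"
    by (rule fsum_in_set) (use V0 Vadd Vc Vsmult Suc.prems r aV in auto)
  have "f (\<Oplus>i\<in>{..<Suc k}. r i \<otimes> a i) = f (r k \<otimes> a k) \<oplus> f (\<Oplus>i\<in>{..<k}. r i \<otimes> a i)"
    using s1 f inV Vsmult aV r Suc.prems unfolding lin_map_def by auto
  also have "\<dots> = r k \<otimes> f (a k) \<oplus> (\<Oplus>i\<in>{..<k}. r i \<otimes> f (a i))"
    using Suc f aV r unfolding lin_map_def by auto
  finally show ?case using s2 by simp
qed

lemma qp_lift:
  assumes qp: "quasi_projective R V" and sm: "submod R V N" and y: "\<forall>i<n. y i \<in> V"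
    and hr: "\<forall>r. isrel R n a r \<longrightarrow> (\<Oplus>i\<in>{..<n}. r i \<otimes> y i) \<in> N"
  shows "\<exists>z. (\<forall>i<n. z i \<in> V) \<and> (\<forall>i<n. z i \<ominus> y i \<in> N) \<and>
             (\<forall>r. isrel R n a r \<longrightarrow> (\<Oplus>i\<in>{..<n}. r i \<otimes> z i) = \<zero>)"
proof -
  define g where "g v = N +> (\<Oplus>i\<in>{..<n}. rep R n a v i \<otimes> y i)" for v
  have yc: "\<And>i. i < n \<Longrightarrow> y i \<in> carrier R" using y Vc by auto
  have key: "g v = N +> (\<Oplus>i\<in>{..<n}. r i \<otimes> y i)"
    if v: "v \<in> V" and r: "\<forall>i<n. r i \<in> carrier R" and e: "v = (\<Oplus>i\<in>{..<n}. r i \<otimes> a i)" for v r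
  proof -
    have "(\<Oplus>i\<in>{..<n}. rep R n a v i \<otimes> y i) \<ominus> (\<Oplus>i\<in>{..<n}. r i \<otimes> y i) \<in> N"
      apply (rule well_def[OF hr a yc rep_ok(1)[OF v] r])
      using trans[OF rep_ok(2)[OF v, symmetric] e] by auto
    then show ?thesis unfolding g_def
      using coset_eq_iff[OF sm Vc] rep_ok[OF v] r yc by (auto intro!: fsum_closed)
  qed
  have lin: "lin_map_quot R V N g"
    unfolding lin_map_quot_def
  proof (intro conjI ballI)
    fix v assume v: "v \<in> V"
    show "g v \<in> quot_carrier R V N"
      unfolding quot_carrier_def g_def using lc_in_V[OF rep_ok(1)[OF v] y] by blast
  next
    fix u v assume u: "u \<in> V" and v: "v \<in> V"
    let ?r = "rep R n a u" and ?r' = "rep R n a v"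
    have ru: "\<forall>i<n. ?r i \<in> carrier R" and rv: "\<forall>i<n. ?r' i \<in> carrier R"
      using rep_ok u v by auto
    have e1: "u \<oplus> v = (\<Oplus>i\<in>{..<n}. (?r i \<oplus> ?r' i) \<otimes> a i)"
      using span_add[OF a ru rv] rep_ok(2)[OF u] rep_ok(2)[OF v] by simp
    have "g (u \<oplus> v) = N +> (\<Oplus>i\<in>{..<n}. (?r i \<oplus> ?r' i) \<otimes> y i)"
      using key[OF Vadd[OF u v] _ e1] ru rv by auto
    also have "\<dots> = N +> ((\<Oplus>i\<in>{..<n}. ?r i \<otimes> y i) \<oplus> (\<Oplus>i\<in>{..<n}. ?r' i \<otimes> y i))"
      using span_add[OF yc ru rv] by simp
    also have "\<dots> = set_add R (g u) (g v)"
      unfolding g_def using coset_sum[OF sm Vc] ru rv yc by (auto intro!: fsum_closed)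
    finally show "g (u \<oplus> v) = set_add R (g u) (g v)" .
  next
    fix c v assume c: "c \<in> carrier R" and v: "v \<in> V"
    let ?r = "rep R n a v"
    have rv: "\<forall>i<n. ?r i \<in> carrier R" using rep_ok v by auto
    have e1: "c \<otimes> v = (\<Oplus>i\<in>{..<n}. (c \<otimes> ?r i) \<otimes> a i)"
      using span_smult[OF a rv c] rep_ok(2)[OF v] by simp
    have "g (c \<otimes> v) = N +> (\<Oplus>i\<in>{..<n}. (c \<otimes> ?r i) \<otimes> y i)"
      using key[OF Vsmult[OF c v] _ e1] c rv by auto
    also have "\<dots> = N +> (c \<otimes> (\<Oplus>i\<in>{..<n}. ?r i \<otimes> y i))"
      using span_smult[OF yc rv c] by simp
    also have "\<dots> = quot_smult R N c (g v)"
      unfolding g_def using coset_smult[OF sm Vc] rv yc c by (auto intro!: fsum_closed)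
    finally show "g (c \<otimes> v) = quot_smult R N c (g v)" .
  qed
  obtain f where f: "lin_map R V V f" "\<forall>v\<in>V. N +> f v = g v"
    using qp sm lin unfolding quasi_projective_def by blast
  define z where "z i = f (a i)" for i
  have zV: "\<forall>i<n. z i \<in> V" using f aV unfolding z_def lin_map_def by auto
  have zN: "\<forall>i<n. z i \<ominus> y i \<in> N"
  proof (intro allI impI)
    fix k assume k: "k < n"
    let ?d = "\<lambda>i. if i = k then \<one> else \<zero>"
    have "g (a k) = N +> (\<Oplus>i\<in>{..<n}. ?d i \<otimes> y i)"
      by (rule key) (use aV k fsum_delta[OF k a] in auto)
    also have "\<dots> = N +> y k" using fsum_delta[OF k yc] by simp
    finally have "N +> z k = N +> y k" using f(2) aV k unfolding z_def by auto
    then show "z k \<ominus> y k \<in> N" using coset_eq_iff[OF sm Vc] zV yc Vc k by auto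
  qed
  have zr: "\<forall>r. isrel R n a r \<longrightarrow> (\<Oplus>i\<in>{..<n}. r i \<otimes> z i) = \<zero>"
  proof (intro allI impI)
    fix r assume "isrel R n a r"
    then have r: "\<forall>i<n. r i \<in> carrier R" "(\<Oplus>i\<in>{..<n}. r i \<otimes> a i) = \<zero>"
      unfolding isrel_def by auto
    have "(\<Oplus>i\<in>{..<n}. r i \<otimes> z i) = f (\<Oplus>i\<in>{..<n}. r i \<otimes> a i)"
      unfolding z_def using lin_sum[OF f(1) r(1)] by simp
    also have "\<dots> = f \<zero>" using r by simp
    also have "\<dots> = \<zero>" using lin_sum[OF f(1) r(1), of 0] by simp
    finally show "(\<Oplus>i\<in>{..<n}. r i \<otimes> z i) = \<zero>" .
  qed
  show ?thesis using zV zN zr by blast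
qed


lemma lift_qp:
  assumes H: "\<And>N y. submod R V N \<Longrightarrow> \<forall>i<n. y i \<in> V \<Longrightarrow>
      \<forall>r. isrel R n a r \<longrightarrow> (\<Oplus>i\<in>{..<n}. r i \<otimes> y i) \<in> N \<Longrightarrow>
      \<exists>z. (\<forall>i<n. z i \<in> V) \<and> (\<forall>i<n. z i \<ominus> y i \<in> N) \<and>
             (\<forall>r. isrel R n a r \<longrightarrow> (\<Oplus>i\<in>{..<n}. r i \<otimes> z i) = \<zero>)"
  shows "quasi_projective R V"
  unfolding quasi_projective_def
proof (intro allI impI, elim conjE)
  fix N g assume sm: "submod R V N" and lg: "lin_map_quot R V N g"
  have gq: "\<And>v. v \<in> V \<Longrightarrow> \<exists>w. w \<in> V \<and> g v = N +> w"
    using lg unfolding lin_map_quot_def quot_carrier_def by blast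
  define y where "y i = (SOME w. w \<in> V \<and> g (a i) = N +> w)" for i
  have y: "y i \<in> V" "g (a i) = N +> y i" if "i < n" for i
    using someI_ex[OF gq[OF aV[OF that]]] unfolding y_def by auto
  have yc: "\<And>i. i < n \<Longrightarrow> y i \<in> carrier R" using y Vc by auto
  have g0: "g \<zero> = N +> \<zero>"
  proof -
    obtain w where w: "w \<in> V" "g \<zero> = N +> w" using gq V0 by blast
    have "g (\<zero> \<otimes> \<zero>) = quot_smult R N \<zero> (g \<zero>)" using lg V0 unfolding lin_map_quot_def by blast
    also have "\<dots> = N +> (\<zero> \<otimes> w)" using w coset_smult[OF sm Vc] Vc by auto
    finally show ?thesis using w Vc by auto
  qed
  have gsum: "g (\<Oplus>i\<in>{..<k}. r i \<otimes> a i) = N +> (\<Oplus>i\<in>{..<k}. r i \<otimes> y i)"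
    if r: "\<forall>i<n. r i \<in> carrier R" and k: "k \<le> n" for r k
    using k
  proof (induction k)
    case 0 then show ?case using g0 by simp
  next
    case (Suc k)
    have s1: "(\<Oplus>i\<in>{..<Suc k}. r i \<otimes> a i) = r k \<otimes> a k \<oplus> (\<Oplus>i\<in>{..<k}. r i \<otimes> a i)"
      using Suc.prems r a by (intro fsum_Suc) auto
    have s2: "(\<Oplus>i\<in>{..<Suc k}. r i \<otimes> y i) = r k \<otimes> y k \<oplus> (\<Oplus>i\<in>{..<k}. r i \<otimes> y i)"
      using Suc.prems r yc by (intro fsum_Suc) auto
    have inV: "(\<Oplus>i\<in>{..<k}. r i \<otimes> a i) \<in> V"
      by (rule fsum_in_set) (use V0 Vadd Vc Vsmult Suc.prems r aV in auto)
    have kn: "k < n" using Suc.prems by simp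
    have "g (\<Oplus>i\<in>{..<Suc k}. r i \<otimes> a i) = set_add R (g (r k \<otimes> a k)) (g (\<Oplus>i\<in>{..<k}. r i \<otimes> a i))"
      using s1 lg inV Vsmult aV r kn unfolding lin_map_quot_def by auto
    also have "g (r k \<otimes> a k) = quot_smult R N (r k) (g (a k))"
      using lg aV r kn unfolding lin_map_quot_def by auto
    also have "\<dots> = N +> (r k \<otimes> y k)" using y[OF kn] coset_smult[OF sm Vc] yc kn r by auto
    also have "g (\<Oplus>i\<in>{..<k}. r i \<otimes> a i) = N +> (\<Oplus>i\<in>{..<k}. r i \<otimes> y i)"
      using Suc by simp
    also have "set_add R (N +> (r k \<otimes> y k)) \<dots> = N +> (r k \<otimes> y k \<oplus> (\<Oplus>i\<in>{..<k}. r i \<otimes> y i))"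
      using coset_sum[OF sm Vc] r yc kn by (auto intro!: fsum_closed)
    finally show ?case using s2 by simp
  qed
  have hr: "\<forall>r. isrel R n a r \<longrightarrow> (\<Oplus>i\<in>{..<n}. r i \<otimes> y i) \<in> N"
  proof (intro allI impI)
    fix r assume "isrel R n a r"
    then have r: "\<forall>i<n. r i \<in> carrier R" "(\<Oplus>i\<in>{..<n}. r i \<otimes> a i) = \<zero>"
      unfolding isrel_def by auto
    have c: "(\<Oplus>i\<in>{..<n}. r i \<otimes> y i) \<in> carrier R" using r yc by (auto intro!: fsum_closed)
    have "N +> (\<Oplus>i\<in>{..<n}. r i \<otimes> y i) = N +> \<zero>" using gsum[OF r(1), of n] r(2) g0 by simp
    then have "(\<Oplus>i\<in>{..<n}. r i \<otimes> y i) \<ominus> \<zero> \<in> N" using coset_eq_iff[OF sm Vc] c by auto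
    then show "(\<Oplus>i\<in>{..<n}. r i \<otimes> y i) \<in> N" using c by (simp add: a_minus_def)
  qed
  obtain z where z: "\<forall>i<n. z i \<in> V" "\<forall>i<n. z i \<ominus> y i \<in> N"
      "\<forall>r. isrel R n a r \<longrightarrow> (\<Oplus>i\<in>{..<n}. r i \<otimes> z i) = \<zero>"
    using H[OF sm _ hr] y by blast
  have zc: "\<And>i. i < n \<Longrightarrow> z i \<in> carrier R" using z Vc by auto
  define f where "f v = (\<Oplus>i\<in>{..<n}. rep R n a v i \<otimes> z i)" for v
  have key: "f v = (\<Oplus>i\<in>{..<n}. r i \<otimes> z i)"
    if v: "v \<in> V" and r: "\<forall>i<n. r i \<in> carrier R" and e: "v = (\<Oplus>i\<in>{..<n}. r i \<otimes> a i)" for v r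
  proof -
    have "(\<Oplus>i\<in>{..<n}. rep R n a v i \<otimes> z i) \<ominus> (\<Oplus>i\<in>{..<n}. r i \<otimes> z i) \<in> {\<zero>}"
      apply (rule well_def[OF _ a zc rep_ok(1)[OF v] r])
      using z(3) trans[OF rep_ok(2)[OF v, symmetric] e] by auto
    then show ?thesis unfolding f_def
      using minus_zero_eq rep_ok[OF v] r zc by (auto intro!: fsum_closed)
  qed
  have lin: "lin_map R V V f"
    unfolding lin_map_def
  proof (intro conjI ballI)
    fix v assume v: "v \<in> V"
    show "f v \<in> V" unfolding f_def using lc_in_V[OF rep_ok(1)[OF v]] z(1) by blast
  next
    fix u v assume u: "u \<in> V" and v: "v \<in> V"
    let ?r = "rep R n a u" and ?r' = "rep R n a v"
    have ru: "\<forall>i<n. ?r i \<in> carrier R" and rv: "\<forall>i<n. ?r' i \<in> carrier R"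
      using rep_ok u v by auto
    have e1: "u \<oplus> v = (\<Oplus>i\<in>{..<n}. (?r i \<oplus> ?r' i) \<otimes> a i)"
      using span_add[OF a ru rv] rep_ok(2)[OF u] rep_ok(2)[OF v] by simp
    have "f (u \<oplus> v) = (\<Oplus>i\<in>{..<n}. (?r i \<oplus> ?r' i) \<otimes> z i)"
      using key[OF Vadd[OF u v] _ e1] ru rv by auto
    also have "\<dots> = f u \<oplus> f v"
      unfolding f_def using span_add[OF zc ru rv] by simp
    finally show "f (u \<oplus> v) = f u \<oplus> f v" .
  next
    fix c v assume c: "c \<in> carrier R" and v: "v \<in> V"
    let ?r = "rep R n a v"
    have rv: "\<forall>i<n. ?r i \<in> carrier R" using rep_ok v by auto
    have e1: "c \<otimes> v = (\<Oplus>i\<in>{..<n}. (c \<otimes> ?r i) \<otimes> a i)"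
      using span_smult[OF a rv c] rep_ok(2)[OF v] by simp
    have "f (c \<otimes> v) = (\<Oplus>i\<in>{..<n}. (c \<otimes> ?r i) \<otimes> z i)"
      using key[OF Vsmult[OF c v] _ e1] c rv by auto
    also have "\<dots> = c \<otimes> f v"
      unfolding f_def using span_smult[OF zc rv c] by simp
    finally show "f (c \<otimes> v) = c \<otimes> f v" .
  qed
  have agree: "N +> f v = g v" if v: "v \<in> V" for v
  proof -
    let ?r = "rep R n a v"
    have rv: "\<forall>i<n. ?r i \<in> carrier R" using rep_ok v by auto
    have gv: "g v = N +> (\<Oplus>i\<in>{..<n}. ?r i \<otimes> y i)"
      using gsum[OF rv, of n] rep_ok(2)[OF v] by simp
    have "f v \<ominus> (\<Oplus>i\<in>{..<n}. ?r i \<otimes> y i) = (\<Oplus>i\<in>{..<n}. ?r i \<otimes> z i \<ominus> ?r i \<otimes> y i)"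
      unfolding f_def using rv zc yc by (intro fsum_minus[symmetric]) auto
    also have "\<dots> = (\<Oplus>i\<in>{..<n}. ?r i \<otimes> (z i \<ominus> y i))"
      using rv zc yc by (intro fsum_cong) (auto simp: r_minus a_minus_def r_distr)
    also have "\<dots> \<in> N"
      by (rule fsum_in_set) (use N0[OF sm Vc] Nadd[OF sm Vc] Nc[OF sm Vc] Nsmult[OF sm Vc] rv z(2) in auto)
    finally have "f v \<ominus> (\<Oplus>i\<in>{..<n}. ?r i \<otimes> y i) \<in> N" .
    moreover have "f v \<in> carrier R" using lin v Vc unfolding lin_map_def by auto
    moreover have "(\<Oplus>i\<in>{..<n}. ?r i \<otimes> y i) \<in> carrier R" using rv yc by (auto intro!: fsum_closed)
    ultimately show ?thesis unfolding gv using coset_eq_iff[OF sm Vc] by blast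
  qed
  show "\<exists>f. lin_map R V V f \<and> (\<forall>v\<in>V. N +> f v = g v)" using lin agree by blast
qed

end
end

context cring begin

lemma zero_comb:
  assumes "X = p \<otimes> E1 \<oplus> q \<otimes> E2" "E1 = \<zero>" "E2 = \<zero>" "p \<in> carrier R" "q \<in> carrier R"
  shows "X = \<zero>"
  using assms by simp

end

locale locP = cring + fixes P assumes maxP: "maximalideal P R"
begin

abbreviation "S \<equiv> carrier R - P"
abbreviation "cls x \<equiv> loc_cls R P x"
abbreviation "eqv a s b t \<equiv> (\<exists>u\<in>S. u \<otimes> ((a \<otimes> t) \<ominus> (b \<otimes> s)) = \<zero>)"

lemma primeP: "primeideal P R" using maximalideal_prime maxP by blast
lemma P_sub: "P \<subseteq> carrier R"
  using maxP by (simp add: maximalideal.axioms(1) ideal.axioms(1) additive_subgroup.a_subset)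
lemma one_S: "\<one> \<in> S"
  using maxP ideal.one_imp_carrier maximalideal.I_notcarr maximalideal.axioms(1) by fastforce
lemma S_mult: "s \<in> S \<Longrightarrow> t \<in> S \<Longrightarrow> s \<otimes> t \<in> S"
  using primeideal.I_prime[OF primeP] by auto
lemma S_c: "s \<in> S \<Longrightarrow> s \<in> carrier R" by auto

lemma eqv_refl: "a \<in> carrier R \<Longrightarrow> s \<in> S \<Longrightarrow> eqv a s a s"
  by (intro bexI[OF _ one_S]) (simp add: r_neg a_minus_def)

lemma eqv_sym:
  assumes "a \<in> carrier R" "s \<in> S" "b \<in> carrier R" "t \<in> S" "eqv a s b t"
  shows "eqv b t a s"
proof -
  obtain u where u: "u \<in> S" "u \<otimes> ((a \<otimes> t) \<ominus> (b \<otimes> s)) = \<zero>" using assms by blast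
  have c: "a \<in> carrier R" "s \<in> carrier R" "b \<in> carrier R" "t \<in> carrier R" "u \<in> carrier R"
    using assms u by auto
  have "u \<otimes> ((b \<otimes> s) \<ominus> (a \<otimes> t)) = \<ominus>\<one> \<otimes> (u \<otimes> ((a \<otimes> t) \<ominus> (b \<otimes> s))) \<oplus> \<zero> \<otimes> \<zero>"
    using c by algebra
  then have "u \<otimes> ((b \<otimes> s) \<ominus> (a \<otimes> t)) = \<zero>" using u by simp
  then show ?thesis using u by blast
qed

lemma eqv_trans:
  assumes "a \<in> carrier R" "s \<in> S" "b \<in> carrier R" "t \<in> S" "c \<in> carrier R" "w \<in> S"
    "eqv a s b t" "eqv b t c w"
  shows "eqv a s c w"
proof -
  obtain u where u: "u \<in> S" "u \<otimes> ((a \<otimes> t) \<ominus> (b \<otimes> s)) = \<zero>" using assms by blast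
  obtain v where v: "v \<in> S" "v \<otimes> ((b \<otimes> w) \<ominus> (c \<otimes> t)) = \<zero>" using assms by blast
  have uvt: "u \<otimes> v \<otimes> t \<in> S" using S_mult[OF S_mult[OF u(1) v(1)] assms(4)] .
  have cc: "a \<in> carrier R" "s \<in> carrier R" "b \<in> carrier R" "t \<in> carrier R" "u \<in> carrier R"
     "v \<in> carrier R" "c \<in> carrier R" "w \<in> carrier R"
    using assms u v by auto
  have "(u \<otimes> v \<otimes> t) \<otimes> ((a \<otimes> w) \<ominus> (c \<otimes> s)) =
        (v \<otimes> w) \<otimes> (u \<otimes> ((a \<otimes> t) \<ominus> (b \<otimes> s))) \<oplus> (u \<otimes> s) \<otimes> (v \<otimes> ((b \<otimes> w) \<ominus> (c \<otimes> t)))"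
    using cc by algebra
  then have "(u \<otimes> v \<otimes> t) \<otimes> ((a \<otimes> w) \<ominus> (c \<otimes> s)) = \<zero>"
    by (rule zero_comb[OF _ u(2) v(2)]) (use cc in auto)
  then show ?thesis using uvt by blast
qed

lemma cls_mem_iff:
  "(b, t) \<in> cls (a, s) \<longleftrightarrow> b \<in> carrier R \<and> t \<in> S \<and> eqv a s b t"
  unfolding loc_cls_def by simp

lemma cls_self: "a \<in> carrier R \<Longrightarrow> s \<in> S \<Longrightarrow> (a, s) \<in> cls (a, s)"
  using eqv_refl[of a s] by (simp add: cls_mem_iff)

lemma cls_eq_iff:
  assumes "a \<in> carrier R" "s \<in> S" "b \<in> carrier R" "t \<in> S"
  shows "cls (a, s) = cls (b, t) \<longleftrightarrow> eqv a s b t"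
proof
  assume "cls (a, s) = cls (b, t)"
  then have "(a, s) \<in> cls (b, t)" using cls_self[OF assms(1,2)] by simp
  then have "eqv b t a s" by (simp only: cls_mem_iff)
  then show "eqv a s b t" using eqv_sym[OF assms(3,4,1,2)] by simp
next
  assume e: "eqv a s b t"
  have e': "eqv b t a s" using eqv_sym[OF assms e] .
  show "cls (a, s) = cls (b, t)"
  proof (rule equalityI; rule subsetI)
    fix x assume "x \<in> cls (a, s)"
    moreover obtain c w where xe: "x = (c, w)" by (cases x)
    ultimately have x: "x = (c, w)" "c \<in> carrier R" "w \<in> S" "eqv a s c w"
      using cls_mem_iff[of c w a s] by auto
    then have "eqv b t c w" using eqv_trans[OF assms(3,4,1,2) x(2,3) e'] by simp
    then show "x \<in> cls (b, t)" using x by (simp add: cls_mem_iff)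
  next
    fix x assume "x \<in> cls (b, t)"
    moreover obtain c w where xe: "x = (c, w)" by (cases x)
    ultimately have x: "x = (c, w)" "c \<in> carrier R" "w \<in> S" "eqv b t c w"
      using cls_mem_iff[of c w b t] by auto
    then have "eqv a s c w" using eqv_trans[OF assms x(2,3) e] by simp
    then show "x \<in> cls (a, s)" using x by (simp add: cls_mem_iff)
  qed
qed

lemma cls_eqI:
  assumes "a \<in> carrier R" "s \<in> S" "b \<in> carrier R" "t \<in> S" "(a \<otimes> t) \<ominus> (b \<otimes> s) = \<zero>"
  shows "cls (a, s) = cls (b, t)"
proof -
  have "\<one> \<otimes> ((a \<otimes> t) \<ominus> (b \<otimes> s)) = \<zero>" using assms(5) by simp
  then have "eqv a s b t" by (rule bexI[OF _ one_S])
  then show ?thesis using cls_eq_iff[OF assms(1-4)] by simp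
qed

lemma cls_eqI':
  assumes "a \<in> carrier R" "s \<in> S" "b \<in> carrier R" "t \<in> S" "a \<otimes> t = b \<otimes> s"
  shows "cls (a, s) = cls (b, t)"
  using assms by (intro cls_eqI) (auto simp: r_neg a_minus_def)

lemma cls_in_eq:
  assumes "(b, t) \<in> cls (a, s)" "a \<in> carrier R" "s \<in> S"
  shows "cls (b, t) = cls (a, s)" "b \<in> carrier R" "t \<in> S"
proof -
  have h: "b \<in> carrier R" "t \<in> S" "eqv a s b t" using assms(1) by (simp_all only: cls_mem_iff)
  show "b \<in> carrier R" "t \<in> S" using h by auto
  show "cls (b, t) = cls (a, s)"
    using cls_eq_iff[OF h(1,2) assms(2,3)] eqv_sym[OF assms(2,3) h(1,2) h(3)] by simp
qed

lemma union_const: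
  assumes "\<And>x. x \<in> A \<Longrightarrow> x = c" "A \<noteq> {}"
  shows "\<Union>A = c"
  using assms by blast

lemma loc_add_cls:
  assumes a: "a \<in> carrier R" "s \<in> S" and b: "b \<in> carrier R" "t \<in> S"
  shows "loc_add R P (cls (a, s)) (cls (b, t)) = cls ((a \<otimes> t) \<oplus> (b \<otimes> s), s \<otimes> t)"
  unfolding loc_add_def
proof (rule union_const)
  show "{cls ((a' \<otimes> t') \<oplus> (b' \<otimes> s'), s' \<otimes> t') | a' s' b' t'.
         (a', s') \<in> cls (a, s) \<and> (b', t') \<in> cls (b, t)} \<noteq> {}"
    using cls_self a b by blast
  fix X assume "X \<in> {cls ((a' \<otimes> t') \<oplus> (b' \<otimes> s'), s' \<otimes> t') | a' s' b' t'.
         (a', s') \<in> cls (a, s) \<and> (b', t') \<in> cls (b, t)}"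
  then obtain a' s' b' t' where X: "X = cls ((a' \<otimes> t') \<oplus> (b' \<otimes> s'), s' \<otimes> t')"
    "(a', s') \<in> cls (a, s)" "(b', t') \<in> cls (b, t)" by blast
  obtain u where u: "u \<in> S" "u \<otimes> ((a \<otimes> s') \<ominus> (a' \<otimes> s)) = \<zero>" "a' \<in> carrier R" "s' \<in> S"
    using X(2) cls_mem_iff by blast
  obtain v where v: "v \<in> S" "v \<otimes> ((b \<otimes> t') \<ominus> (b' \<otimes> t)) = \<zero>" "b' \<in> carrier R" "t' \<in> S"
    using X(3) cls_mem_iff by blast
  have cc: "a \<in> carrier R" "s \<in> carrier R" "b \<in> carrier R" "t \<in> carrier R" "u \<in> carrier R"
     "v \<in> carrier R" "a' \<in> carrier R" "s' \<in> carrier R" "b' \<in> carrier R" "t' \<in> carrier R"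
    using a b u v by auto
  have "(u \<otimes> v) \<otimes> ((((a' \<otimes> t') \<oplus> (b' \<otimes> s')) \<otimes> (s \<otimes> t)) \<ominus> (((a \<otimes> t) \<oplus> (b \<otimes> s)) \<otimes> (s' \<otimes> t'))) =
        (\<ominus> (v \<otimes> t \<otimes> t')) \<otimes> (u \<otimes> ((a \<otimes> s') \<ominus> (a' \<otimes> s))) \<oplus> (\<ominus> (u \<otimes> s \<otimes> s')) \<otimes> (v \<otimes> ((b \<otimes> t') \<ominus> (b' \<otimes> t)))"
    using cc by algebra
  then have "(u \<otimes> v) \<otimes> ((((a' \<otimes> t') \<oplus> (b' \<otimes> s')) \<otimes> (s \<otimes> t)) \<ominus> (((a \<otimes> t) \<oplus> (b \<otimes> s)) \<otimes> (s' \<otimes> t'))) = \<zero>"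
    by (rule zero_comb[OF _ u(2) v(2)]) (use cc in auto)
  then have "eqv ((a' \<otimes> t') \<oplus> (b' \<otimes> s')) (s' \<otimes> t') ((a \<otimes> t) \<oplus> (b \<otimes> s)) (s \<otimes> t)"
    by (rule bexI[OF _ S_mult[OF u(1) v(1)]])
  moreover have "(a' \<otimes> t') \<oplus> (b' \<otimes> s') \<in> carrier R" "(a \<otimes> t) \<oplus> (b \<otimes> s) \<in> carrier R"
    using cc by auto
  moreover have "s' \<otimes> t' \<in> S" "s \<otimes> t \<in> S" using S_mult u v a b by auto
  ultimately show "X = cls ((a \<otimes> t) \<oplus> (b \<otimes> s), s \<otimes> t)"
    unfolding X(1) using cls_eq_iff by blast
qed

end

context locP begin

lemma loc_mult_cls:
  assumes a: "a \<in> carrier R" "s \<in> S" and b: "b \<in> carrier R" "t \<in> S"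
  shows "loc_mult R P (cls (a, s)) (cls (b, t)) = cls (a \<otimes> b, s \<otimes> t)"
  unfolding loc_mult_def
proof (rule union_const)
  show "{cls (a' \<otimes> b', s' \<otimes> t') | a' s' b' t'.
         (a', s') \<in> cls (a, s) \<and> (b', t') \<in> cls (b, t)} \<noteq> {}"
    using cls_self a b by blast
  fix X assume "X \<in> {cls (a' \<otimes> b', s' \<otimes> t') | a' s' b' t'.
         (a', s') \<in> cls (a, s) \<and> (b', t') \<in> cls (b, t)}"
  then obtain a' s' b' t' where X: "X = cls (a' \<otimes> b', s' \<otimes> t')"
    "(a', s') \<in> cls (a, s)" "(b', t') \<in> cls (b, t)" by blast
  obtain u where u: "u \<in> S" "u \<otimes> ((a \<otimes> s') \<ominus> (a' \<otimes> s)) = \<zero>" "a' \<in> carrier R" "s' \<in> S"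
    using X(2) cls_mem_iff by blast
  obtain v where v: "v \<in> S" "v \<otimes> ((b \<otimes> t') \<ominus> (b' \<otimes> t)) = \<zero>" "b' \<in> carrier R" "t' \<in> S"
    using X(3) cls_mem_iff by blast
  have cc: "a \<in> carrier R" "s \<in> carrier R" "b \<in> carrier R" "t \<in> carrier R" "u \<in> carrier R"
     "v \<in> carrier R" "a' \<in> carrier R" "s' \<in> carrier R" "b' \<in> carrier R" "t' \<in> carrier R"
    using a b u v by auto
  have "(u \<otimes> v) \<otimes> (((a' \<otimes> b') \<otimes> (s \<otimes> t)) \<ominus> ((a \<otimes> b) \<otimes> (s' \<otimes> t'))) =
        (\<ominus> (v \<otimes> b \<otimes> t')) \<otimes> (u \<otimes> ((a \<otimes> s') \<ominus> (a' \<otimes> s))) \<oplus> (\<ominus> (u \<otimes> a' \<otimes> s)) \<otimes> (v \<otimes> ((b \<otimes> t') \<ominus> (b' \<otimes> t)))"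
    using cc by algebra
  then have "(u \<otimes> v) \<otimes> (((a' \<otimes> b') \<otimes> (s \<otimes> t)) \<ominus> ((a \<otimes> b) \<otimes> (s' \<otimes> t'))) = \<zero>"
    by (rule zero_comb[OF _ u(2) v(2)]) (use cc in auto)
  then have "eqv (a' \<otimes> b') (s' \<otimes> t') (a \<otimes> b) (s \<otimes> t)"
    by (rule bexI[OF _ S_mult[OF u(1) v(1)]])
  moreover have "a' \<otimes> b' \<in> carrier R" "a \<otimes> b \<in> carrier R" using cc by auto
  moreover have "s' \<otimes> t' \<in> S" "s \<otimes> t \<in> S" using S_mult u v a b by auto
  ultimately show "X = cls (a \<otimes> b, s \<otimes> t)"
    unfolding X(1) using cls_eq_iff by blast
qed

abbreviation "L \<equiv> localization R P"

lemma L_carrier_iff: "x \<in> carrier L \<longleftrightarrow> (\<exists>a s. a \<in> carrier R \<and> s \<in> S \<and> x = cls (a, s))"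
  by (auto simp: localization_def)

lemma L_cls: "a \<in> carrier R \<Longrightarrow> s \<in> S \<Longrightarrow> cls (a, s) \<in> carrier L"
  using L_carrier_iff by blast

lemma L_add: "a \<in> carrier R \<Longrightarrow> s \<in> S \<Longrightarrow> b \<in> carrier R \<Longrightarrow> t \<in> S \<Longrightarrow>
   cls (a, s) \<oplus>\<^bsub>L\<^esub> cls (b, t) = cls ((a \<otimes> t) \<oplus> (b \<otimes> s), s \<otimes> t)"
  using loc_add_cls by (simp add: localization_def)

lemma L_mult: "a \<in> carrier R \<Longrightarrow> s \<in> S \<Longrightarrow> b \<in> carrier R \<Longrightarrow> t \<in> S \<Longrightarrow>
   cls (a, s) \<otimes>\<^bsub>L\<^esub> cls (b, t) = cls (a \<otimes> b, s \<otimes> t)"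
  using loc_mult_cls by (simp add: localization_def)

lemma L_zero: "\<zero>\<^bsub>L\<^esub> = cls (\<zero>, \<one>)" by (simp add: localization_def)
lemma L_one: "\<one>\<^bsub>L\<^esub> = cls (\<one>, \<one>)" by (simp add: localization_def)

lemma L_E:
  assumes "x \<in> carrier L"
  obtains a s where "a \<in> carrier R" "s \<in> S" "s \<in> carrier R" "x = cls (a, s)"
  using assms L_carrier_iff by auto

lemma L_cring: "cring L"
proof (rule cringI)
  note S1 = one_S
  note Sm = S_mult
  show "abelian_group L"
  proof (rule abelian_groupI)
    fix x y assume "x \<in> carrier L" "y \<in> carrier L"
    then obtain a s b t where ab: "a \<in> carrier R" "s \<in> S" "b \<in> carrier R" "t \<in> S"
      "x = cls (a, s)" "y = cls (b, t)" by (metis L_E)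
    show "x \<oplus>\<^bsub>L\<^esub> y \<in> carrier L" using ab L_add L_cls Sm by auto
    show "x \<oplus>\<^bsub>L\<^esub> y = y \<oplus>\<^bsub>L\<^esub> x"
      using ab by (simp add: L_add a_comm m_comm)
  next
    show "\<zero>\<^bsub>L\<^esub> \<in> carrier L" using L_zero L_cls S1 by auto
  next
    fix x y z assume "x \<in> carrier L" "y \<in> carrier L" "z \<in> carrier L"
    then obtain a s b t c w where ab: "a \<in> carrier R" "s \<in> S" "b \<in> carrier R" "t \<in> S"
      "c \<in> carrier R" "w \<in> S" "x = cls (a, s)" "y = cls (b, t)" "z = cls (c, w)" by (metis L_E)
    have cc: "a \<in> carrier R" "s \<in> carrier R" "b \<in> carrier R" "t \<in> carrier R" "c \<in> carrier R" "w \<in> carrier R"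
      using ab by auto
    have e: "((a \<otimes> t) \<oplus> (b \<otimes> s)) \<otimes> w \<oplus> c \<otimes> (s \<otimes> t) = a \<otimes> (t \<otimes> w) \<oplus> ((b \<otimes> w) \<oplus> (c \<otimes> t)) \<otimes> s"
      "(s \<otimes> t) \<otimes> w = s \<otimes> (t \<otimes> w)" using cc by algebra+
    show "(x \<oplus>\<^bsub>L\<^esub> y) \<oplus>\<^bsub>L\<^esub> z = x \<oplus>\<^bsub>L\<^esub> (y \<oplus>\<^bsub>L\<^esub> z)"
      using ab Sm by (simp add: L_add e)
  next
    fix x assume "x \<in> carrier L"
    then obtain a s where ab: "a \<in> carrier R" "s \<in> S" "x = cls (a, s)" by (metis L_E)
    show "\<zero>\<^bsub>L\<^esub> \<oplus>\<^bsub>L\<^esub> x = x" using ab S1 by (simp add: L_zero L_add)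
    have "cls (\<ominus> a, s) \<oplus>\<^bsub>L\<^esub> x = cls ((\<ominus> a \<otimes> s) \<oplus> (a \<otimes> s), s \<otimes> s)"
      using ab by (simp add: L_add)
    also have "\<dots> = cls (\<zero>, \<one>)"
      using ab S1 Sm by (intro cls_eqI') (auto, algebra)
    finally show "\<exists>y\<in>carrier L. y \<oplus>\<^bsub>L\<^esub> x = \<zero>\<^bsub>L\<^esub>"
      using L_cls ab by (auto simp: L_zero)
  qed
  show "comm_monoid L"
  proof (rule comm_monoidI)
    fix x y assume "x \<in> carrier L" "y \<in> carrier L"
    then obtain a s b t where ab: "a \<in> carrier R" "s \<in> S" "b \<in> carrier R" "t \<in> S"
      "x = cls (a, s)" "y = cls (b, t)" by (metis L_E)
    show "x \<otimes>\<^bsub>L\<^esub> y \<in> carrier L" using ab L_mult L_cls Sm by auto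
    show "x \<otimes>\<^bsub>L\<^esub> y = y \<otimes>\<^bsub>L\<^esub> x"
      using ab by (simp add: L_mult m_comm)
  next
    show "\<one>\<^bsub>L\<^esub> \<in> carrier L" using L_one L_cls S1 by auto
  next
    fix x y z assume "x \<in> carrier L" "y \<in> carrier L" "z \<in> carrier L"
    then obtain a s b t c w where ab: "a \<in> carrier R" "s \<in> S" "b \<in> carrier R" "t \<in> S"
      "c \<in> carrier R" "w \<in> S" "x = cls (a, s)" "y = cls (b, t)" "z = cls (c, w)" by (metis L_E)
    show "(x \<otimes>\<^bsub>L\<^esub> y) \<otimes>\<^bsub>L\<^esub> z = x \<otimes>\<^bsub>L\<^esub> (y \<otimes>\<^bsub>L\<^esub> z)"
      using ab Sm by (simp add: L_mult m_assoc)
  next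
    fix x assume "x \<in> carrier L"
    then obtain a s where ab: "a \<in> carrier R" "s \<in> S" "x = cls (a, s)" by (metis L_E)
    show "\<one>\<^bsub>L\<^esub> \<otimes>\<^bsub>L\<^esub> x = x" using ab S1 by (simp add: L_one L_mult)
  qed
  fix x y z assume "x \<in> carrier L" "y \<in> carrier L" "z \<in> carrier L"
  then obtain a s b t c w where ab: "a \<in> carrier R" "s \<in> S" "b \<in> carrier R" "t \<in> S"
    "c \<in> carrier R" "w \<in> S" "x = cls (a, s)" "y = cls (b, t)" "z = cls (c, w)" by (metis L_E)
  have cc: "a \<in> carrier R" "s \<in> carrier R" "b \<in> carrier R" "t \<in> carrier R" "c \<in> carrier R" "w \<in> carrier R"
    using ab by auto
  have "(x \<oplus>\<^bsub>L\<^esub> y) \<otimes>\<^bsub>L\<^esub> z = cls (((a \<otimes> t) \<oplus> (b \<otimes> s)) \<otimes> c, (s \<otimes> t) \<otimes> w)"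
    using ab Sm by (simp add: L_add L_mult)
  also have "\<dots> = cls (((a \<otimes> c) \<otimes> (t \<otimes> w)) \<oplus> ((b \<otimes> c) \<otimes> (s \<otimes> w)), (s \<otimes> w) \<otimes> (t \<otimes> w))"
    using ab Sm cc by (intro cls_eqI') (auto, algebra)
  also have "\<dots> = x \<otimes>\<^bsub>L\<^esub> z \<oplus>\<^bsub>L\<^esub> y \<otimes>\<^bsub>L\<^esub> z"
    using ab Sm by (simp add: L_add L_mult)
  finally show "(x \<oplus>\<^bsub>L\<^esub> y) \<otimes>\<^bsub>L\<^esub> z = x \<otimes>\<^bsub>L\<^esub> z \<oplus>\<^bsub>L\<^esub> y \<otimes>\<^bsub>L\<^esub> z" .
qed

end

context locP begin

sublocale Lc: cring "localization R P" by (rule L_cring)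

lemma S_carr: "s \<in> S \<Longrightarrow> s \<in> carrier R" by auto

lemma L_cls_zero_iff:
  assumes "a \<in> carrier R" "s \<in> S"
  shows "cls (a, s) = \<zero>\<^bsub>L\<^esub> \<longleftrightarrow> (\<exists>u\<in>S. u \<otimes> a = \<zero>)"
proof -
  have "cls (a, s) = \<zero>\<^bsub>L\<^esub> \<longleftrightarrow> eqv a s \<zero> \<one>"
    using cls_eq_iff[OF assms, of \<zero> \<one>] one_S by (simp add: L_zero)
  also have "\<dots> \<longleftrightarrow> (\<exists>u\<in>S. u \<otimes> a = \<zero>)"
    using assms by (simp add: a_minus_def)
  finally show ?thesis .
qed

lemma cls_scale:
  assumes "a \<in> carrier R" "s \<in> S" "c \<in> S"
  shows "cls (c \<otimes> a, c \<otimes> s) = cls (a, s)"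
  using assms S_mult by (intro cls_eqI') (auto simp: m_ac)

lemma L_add_same:
  assumes "a \<in> carrier R" "b \<in> carrier R" "s \<in> S"
  shows "cls (a, s) \<oplus>\<^bsub>L\<^esub> cls (b, s) = cls (a \<oplus> b, s)"
proof -
  have "cls (a, s) \<oplus>\<^bsub>L\<^esub> cls (b, s) = cls (s \<otimes> (a \<oplus> b), s \<otimes> s)"
    using assms by (simp add: L_add l_distr r_distr m_comm)
  also have "\<dots> = cls (a \<oplus> b, s)" using assms by (intro cls_scale) auto
  finally show ?thesis .
qed

lemma L_neg:
  assumes "a \<in> carrier R" "s \<in> S"
  shows "\<ominus>\<^bsub>L\<^esub> cls (a, s) = cls (\<ominus> a, s)"
proof (rule Lc.minus_equality)
  have z: "cls (\<zero>, s) = \<zero>\<^bsub>L\<^esub>" using L_cls_zero_iff[of \<zero> s] assms one_S by auto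
  show "cls (\<ominus> a, s) \<oplus>\<^bsub>L\<^esub> cls (a, s) = \<zero>\<^bsub>L\<^esub>"
    using assms by (simp add: L_add_same l_neg z)
qed (use assms L_cls in auto)

lemma L_minus_same:
  assumes "a \<in> carrier R" "b \<in> carrier R" "s \<in> S"
  shows "cls (a, s) \<ominus>\<^bsub>L\<^esub> cls (b, s) = cls (a \<ominus> b, s)"
  using assms by (simp add: a_minus_def a_minus_def L_neg L_add_same)

lemma L_mult1:
  assumes "a \<in> carrier R" "b \<in> carrier R" "s \<in> S"
  shows "cls (a, s) \<otimes>\<^bsub>L\<^esub> cls (b, \<one>) = cls (a \<otimes> b, s)"
  using assms one_S by (simp add: L_mult)

lemma L_sum:
  fixes n :: nat
  assumes "\<And>i. i < n \<Longrightarrow> f i \<in> carrier R" "s \<in> S"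
  shows "(\<Oplus>\<^bsub>L\<^esub> i\<in>{..<n}. cls (f i, s)) = cls (\<Oplus>i\<in>{..<n}. f i, s)"
  using assms(1)
proof (induction n)
  case 0
  have "cls (\<zero>, s) = \<zero>\<^bsub>L\<^esub>" using L_cls_zero_iff[of \<zero> s] assms one_S by auto
  then show ?case by simp
next
  case (Suc n)
  have "(\<Oplus>\<^bsub>L\<^esub> i\<in>{..<Suc n}. cls (f i, s)) = cls (f n, s) \<oplus>\<^bsub>L\<^esub> (\<Oplus>\<^bsub>L\<^esub> i\<in>{..<n}. cls (f i, s))"
    using Suc.prems assms by (intro Lc.fsum_Suc) (auto intro: L_cls)
  also have "\<dots> = cls (f n \<oplus> (\<Oplus>i\<in>{..<n}. f i), s)"
    using Suc assms by (simp add: L_add_same fsum_closed)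
  also have "\<dots> = cls (\<Oplus>i\<in>{..<Suc n}. f i, s)"
    using Suc.prems by (simp add: fsum_Suc)
  finally show ?case .
qed

lemma common_denom:
  fixes n :: nat
  assumes W: "W \<subseteq> carrier R" "\<And>c w. c \<in> carrier R \<Longrightarrow> w \<in> W \<Longrightarrow> c \<otimes> w \<in> W"
    and x: "\<And>i. i < n \<Longrightarrow> \<exists>w s. w \<in> W \<and> s \<in> S \<and> x i = cls (w, s)"
  shows "\<exists>b t. t \<in> S \<and> (\<forall>i<n. b i \<in> W \<and> x i = cls (b i, t))"
  using x
proof (induction n)
  case 0
  then show ?case using one_S by blast
next
  case (Suc n)
  obtain b t where bt: "t \<in> S" "\<forall>i<n. b i \<in> W \<and> x i = cls (b i, t)" using Suc by auto
  obtain w s where ws: "w \<in> W" "s \<in> S" "x n = cls (w, s)" using Suc.prems by blast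
  define b' where "b' i = (if i < n then s \<otimes> b i else t \<otimes> w)" for i
  have "\<forall>i<Suc n. b' i \<in> W \<and> x i = cls (b' i, t \<otimes> s)"
  proof (intro allI impI)
    fix i assume i: "i < Suc n"
    show "b' i \<in> W \<and> x i = cls (b' i, t \<otimes> s)"
    proof (cases "i < n")
      case True
      then have "b' i = s \<otimes> b i" "b i \<in> W" "x i = cls (b i, t)" using bt b'_def by auto
      moreover have "cls (s \<otimes> b i, t \<otimes> s) = cls (b i, t)"
        using cls_scale[of "b i" t s] W bt ws \<open>b i \<in> W\<close> by (auto simp: m_comm)
      ultimately show ?thesis using W ws by auto
    next
      case False
      then have "i = n" using i by simp
      moreover have "cls (t \<otimes> w, t \<otimes> s) = cls (w, s)"
        using cls_scale[of w s t] W bt ws by auto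
      ultimately show ?thesis using False W ws bt b'_def by auto
    qed
  qed
  then show ?case using S_mult bt ws by blast
qed

lemma common_annih:
  fixes m :: nat
  assumes "\<And>j. j < m \<Longrightarrow> X j \<in> carrier R" "\<And>j. j < m \<Longrightarrow> \<exists>u\<in>S. u \<otimes> X j = \<zero>"
  shows "\<exists>u\<in>S. \<forall>j<m. u \<otimes> X j = \<zero>"
  using assms
proof (induction m)
  case 0 then show ?case using one_S by blast
next
  case (Suc m)
  obtain u where u: "u \<in> S" "\<forall>j<m. u \<otimes> X j = \<zero>" using Suc by auto
  obtain v where v: "v \<in> S" "v \<otimes> X m = \<zero>" using Suc.prems by blast
  have "\<forall>j<Suc m. (u \<otimes> v) \<otimes> X j = \<zero>"
  proof (intro allI impI)
    fix j assume j: "j < Suc m"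
    show "(u \<otimes> v) \<otimes> X j = \<zero>"
    proof (cases "j < m")
      case True
      have e: "(u \<otimes> v) \<otimes> X j = v \<otimes> (u \<otimes> X j)" using u v Suc.prems j by (simp add: m_ac)
      have "u \<otimes> X j = \<zero>" using u True by auto
      then show ?thesis using e v by simp
    next
      case False
      then have "j = m" using j by simp
      then have "(u \<otimes> v) \<otimes> X j = u \<otimes> (v \<otimes> X m)" using u v Suc.prems by (simp add: m_ac)
      then show ?thesis using v u by simp
    qed
  qed
  then show ?case using S_mult u v by blast
qed

end

context locP begin

lemma L_denoms:
  fixes n :: nat
  assumes "\<forall>i<n. r i \<in> carrier L"
  shows "\<exists>d s. s \<in> S \<and> (\<forall>i<n. d i \<in> carrier R \<and> r i = cls (d i, s))"
proof -
  have "\<exists>b t. t \<in> S \<and> (\<forall>i<n. b i \<in> carrier R \<and> r i = cls (b i, t))"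
    by (rule common_denom[of "carrier R"]) (use assms L_carrier_iff in auto)
  then show ?thesis by blast
qed

lemma L_lc:
  fixes n :: nat
  assumes "\<And>i. i < n \<Longrightarrow> d i \<in> carrier R" "\<And>i. i < n \<Longrightarrow> b i \<in> carrier R" "s \<in> S" "t \<in> S"
  shows "(\<Oplus>\<^bsub>L\<^esub> i\<in>{..<n}. cls (d i, s) \<otimes>\<^bsub>L\<^esub> cls (b i, t)) = cls (\<Oplus>i\<in>{..<n}. d i \<otimes> b i, s \<otimes> t)"
proof -
  have "(\<Oplus>\<^bsub>L\<^esub> i\<in>{..<n}. cls (d i, s) \<otimes>\<^bsub>L\<^esub> cls (b i, t)) = (\<Oplus>\<^bsub>L\<^esub> i\<in>{..<n}. cls (d i \<otimes> b i, s \<otimes> t))"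
    using assms S_mult by (intro Lc.fsum_cong) (auto simp: L_mult intro!: L_cls)
  also have "\<dots> = cls (\<Oplus>i\<in>{..<n}. d i \<otimes> b i, s \<otimes> t)"
    using assms S_mult by (intro L_sum) auto
  finally show ?thesis .
qed

context
  fixes n :: nat and c :: "nat \<Rightarrow> 'a"
  assumes c: "\<And>i. i < n \<Longrightarrow> c i \<in> carrier R"
begin

abbreviation "c' \<equiv> (\<lambda>i. cls (c i, \<one>))"

lemma c'_carr: "i < n \<Longrightarrow> c' i \<in> carrier L" using c one_S L_cls by auto

lemma span_L_iff:
  "v' \<in> span L n c' \<longleftrightarrow> (\<exists>v s. v \<in> span R n c \<and> s \<in> S \<and> v' = cls (v, s))"
proof
  assume "v' \<in> span L n c'"
  then obtain r where r: "\<forall>i<n. r i \<in> carrier L" "v' = (\<Oplus>\<^bsub>L\<^esub> i\<in>{..<n}. r i \<otimes>\<^bsub>L\<^esub> c' i)"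
    by (rule Lc.span_E)
  obtain d s where ds: "s \<in> S" "\<forall>i<n. d i \<in> carrier R \<and> r i = cls (d i, s)"
    using L_denoms[OF r(1)] by blast
  have "v' = (\<Oplus>\<^bsub>L\<^esub> i\<in>{..<n}. cls (d i, s) \<otimes>\<^bsub>L\<^esub> c' i)"
    using r(2) ds c'_carr by (auto intro!: Lc.fsum_cong intro: L_cls)
  also have "\<dots> = cls (\<Oplus>i\<in>{..<n}. d i \<otimes> c i, s)"
    using L_lc[of n d c s \<one>] ds c one_S by auto
  finally show "\<exists>v s. v \<in> span R n c \<and> s \<in> S \<and> v' = cls (v, s)"
    using ds span_I[of n d] by blast
next
  assume "\<exists>v s. v \<in> span R n c \<and> s \<in> S \<and> v' = cls (v, s)"
  then obtain v s where vs0: "v \<in> span R n c" "s \<in> S" "v' = cls (v, s)" by blast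
  obtain d where d: "\<forall>i<n. d i \<in> carrier R" "v = (\<Oplus>i\<in>{..<n}. d i \<otimes> c i)"
    using vs0(1) by (rule span_E)
  have vs: "s \<in> S" "v' = cls (v, s)" "\<forall>i<n. d i \<in> carrier R" "v = (\<Oplus>i\<in>{..<n}. d i \<otimes> c i)"
    using vs0 d by auto
  have "v' = (\<Oplus>\<^bsub>L\<^esub> i\<in>{..<n}. cls (d i, s) \<otimes>\<^bsub>L\<^esub> c' i)"
    using L_lc[of n d c s \<one>] vs c one_S by auto
  then show "v' \<in> span L n c'"
    by (rule Lc.span_I[rotated]) (use vs L_cls in auto)
qed

lemma rel_up:
  assumes "isrel R n c d"
  shows "isrel L n c' (\<lambda>i. cls (d i, \<one>))"
proof -
  have d: "\<forall>i<n. d i \<in> carrier R" "(\<Oplus>i\<in>{..<n}. d i \<otimes> c i) = \<zero>" using assms unfolding isrel_def by auto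
  have "(\<Oplus>\<^bsub>L\<^esub> i\<in>{..<n}. cls (d i, \<one>) \<otimes>\<^bsub>L\<^esub> c' i) = cls (\<zero>, \<one>)"
    using L_lc[of n d c \<one> \<one>] d c one_S by auto
  then show ?thesis unfolding isrel_def using d one_S L_cls by (auto simp: L_zero)
qed

lemma rel_down:
  assumes "isrel L n c' r"
  shows "\<exists>d s u. s \<in> S \<and> u \<in> S \<and> (\<forall>i<n. d i \<in> carrier R \<and> r i = cls (d i, s)) \<and>
      isrel R n c (\<lambda>i. u \<otimes> d i)"
proof -
  have r: "\<forall>i<n. r i \<in> carrier L" "(\<Oplus>\<^bsub>L\<^esub> i\<in>{..<n}. r i \<otimes>\<^bsub>L\<^esub> c' i) = \<zero>\<^bsub>L\<^esub>"
    using assms unfolding isrel_def by auto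
  obtain d s where ds: "s \<in> S" "\<forall>i<n. d i \<in> carrier R \<and> r i = cls (d i, s)"
    using L_denoms[OF r(1)] by blast
  have "(\<Oplus>\<^bsub>L\<^esub> i\<in>{..<n}. r i \<otimes>\<^bsub>L\<^esub> c' i) = (\<Oplus>\<^bsub>L\<^esub> i\<in>{..<n}. cls (d i, s) \<otimes>\<^bsub>L\<^esub> c' i)"
    using ds c'_carr by (auto intro!: Lc.fsum_cong intro: L_cls)
  also have "\<dots> = cls (\<Oplus>i\<in>{..<n}. d i \<otimes> c i, s)"
    using L_lc[of n d c s \<one>] ds c one_S by auto
  finally have "cls (\<Oplus>i\<in>{..<n}. d i \<otimes> c i, s) = \<zero>\<^bsub>L\<^esub>" using r(2) by simp
  then obtain u where u: "u \<in> S" "u \<otimes> (\<Oplus>i\<in>{..<n}. d i \<otimes> c i) = \<zero>"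
    using L_cls_zero_iff ds c by (auto intro!: fsum_closed)
  have "(\<Oplus>i\<in>{..<n}. (u \<otimes> d i) \<otimes> c i) = \<zero>"
    using span_smult[of n c d u] u ds c by auto
  then have "isrel R n c (\<lambda>i. u \<otimes> d i)" unfolding isrel_def using u ds by auto
  then show ?thesis using ds u by blast
qed

end
end

context locP begin

lemma qp_up:
  fixes n :: nat and c :: "nat \<Rightarrow> 'a"
  assumes c: "\<And>i. i < n \<Longrightarrow> c i \<in> carrier R"
    and qpV: "quasi_projective R (span R n c)"
  shows "quasi_projective L (span L n (c' c))"
proof (rule Lc.lift_qp[where n=n and a="c' c" and V="span L n (c' c)"])
  show "\<And>i. i < n \<Longrightarrow> c' c i \<in> carrier L" using c'_carr[of n c, OF c] by auto
  show "span L n (c' c) = span L n (c' c)" ..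
  let ?V = "span R n c" and ?V' = "span L n (c' c)"
  have Vc: "?V \<subseteq> carrier R" using Vc[of n c, OF c refl] .
  have V'c: "?V' \<subseteq> carrier L" using Lc.Vc[OF c'_carr[of n c, OF c] refl] .
  fix N' y'
  assume sm': "submod L ?V' N'" and y': "\<forall>i<n. y' i \<in> ?V'"
    and hr': "\<forall>r. isrel L n (c' c) r \<longrightarrow> (\<Oplus>\<^bsub>L\<^esub> i\<in>{..<n}. r i \<otimes>\<^bsub>L\<^esub> y' i) \<in> N'"
  note N'0 = Lc.N0[OF sm' V'c] and N'add = Lc.Nadd[OF sm' V'c] and N'neg = Lc.Nneg[OF sm' V'c]
    and N'smult = Lc.Nsmult[OF sm' V'c]
  have "\<exists>b t. t \<in> S \<and> (\<forall>i<n. b i \<in> ?V \<and> y' i = cls (b i, t))"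
  proof (rule common_denom)
    show "?V \<subseteq> carrier R" by (rule Vc)
    show "\<And>ca w. ca \<in> carrier R \<Longrightarrow> w \<in> ?V \<Longrightarrow> ca \<otimes> w \<in> ?V" using Vsmult[of n c, OF c refl] .
    show "\<And>i. i < n \<Longrightarrow> \<exists>w s. w \<in> ?V \<and> s \<in> S \<and> y' i = cls (w, s)"
      using y' span_L_iff[of n c, OF c] by blast
  qed
  then obtain b t where bt: "t \<in> S" "\<forall>i<n. b i \<in> ?V \<and> y' i = cls (b i, t)" by blast
  have bc: "\<And>i. i < n \<Longrightarrow> b i \<in> carrier R" using bt Vc by auto
  define N where "N = {v \<in> ?V. cls (v, \<one>) \<in> N'}"
  have sm: "submod R ?V N" unfolding submod_def
  proof (intro conjI ballI)
    show "N \<subseteq> ?V" unfolding N_def by auto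
    have "cls (\<zero>, \<one>) \<in> N'" using N'0 by (simp add: L_zero)
    then show "\<zero> \<in> N" unfolding N_def using V0[of n c, OF c refl] by auto
  next
    fix x y assume "x \<in> N" "y \<in> N"
    then have h: "x \<in> ?V" "y \<in> ?V" "cls (x, \<one>) \<in> N'" "cls (y, \<one>) \<in> N'" unfolding N_def by auto
    have "cls (x \<oplus> y, \<one>) = cls (x, \<one>) \<oplus>\<^bsub>L\<^esub> cls (y, \<one>)"
      using h Vc one_S by (subst L_add_same) auto
    then show "x \<oplus> y \<in> N" unfolding N_def using h N'add Vadd[of n c, OF c refl] by auto
  next
    fix x assume "x \<in> N"
    then have h: "x \<in> ?V" "cls (x, \<one>) \<in> N'" unfolding N_def by auto
    have "cls (\<ominus> x, \<one>) = \<ominus>\<^bsub>L\<^esub> cls (x, \<one>)" using h Vc one_S L_neg by auto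
    moreover have "\<ominus> x \<in> ?V" using h Vsmult[of n c, OF c refl, of "\<ominus> \<one>" x] Vc by (auto simp: l_minus)
    ultimately show "\<ominus> x \<in> N" unfolding N_def using h N'neg by auto
  next
    fix r x assume r: "r \<in> carrier R" and "x \<in> N"
    then have h: "x \<in> ?V" "cls (x, \<one>) \<in> N'" unfolding N_def by auto
    have "cls (r \<otimes> x, \<one>) = cls (r, \<one>) \<otimes>\<^bsub>L\<^esub> cls (x, \<one>)" using h r Vc one_S L_mult1 by auto
    moreover have "cls (r, \<one>) \<in> carrier L" using r one_S L_cls by auto
    ultimately show "r \<otimes> x \<in> N" unfolding N_def using h N'smult Vsmult[of n c, OF c refl] r by auto
  qed
  have hr: "\<forall>d. isrel R n c d \<longrightarrow> (\<Oplus>i\<in>{..<n}. d i \<otimes> b i) \<in> N"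
  proof (intro allI impI)
    fix d assume rel: "isrel R n c d"
    then have d: "\<forall>i<n. d i \<in> carrier R" unfolding isrel_def by auto
    have sc: "(\<Oplus>i\<in>{..<n}. d i \<otimes> b i) \<in> carrier R" using d bc by (auto intro!: fsum_closed)
    have "(\<Oplus>\<^bsub>L\<^esub> i\<in>{..<n}. cls (d i, \<one>) \<otimes>\<^bsub>L\<^esub> y' i) \<in> N'"
      using hr' rel_up[of n c, OF c rel] by blast
    moreover have "(\<Oplus>\<^bsub>L\<^esub> i\<in>{..<n}. cls (d i, \<one>) \<otimes>\<^bsub>L\<^esub> y' i) =
        (\<Oplus>\<^bsub>L\<^esub> i\<in>{..<n}. cls (d i, \<one>) \<otimes>\<^bsub>L\<^esub> cls (b i, t))"
      using bt d bc one_S by (intro Lc.fsum_cong) (auto intro!: L_cls)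
    moreover have "\<dots> = cls (\<Oplus>i\<in>{..<n}. d i \<otimes> b i, \<one> \<otimes> t)"
      using L_lc[of n d b \<one> t] d bc one_S bt by auto
    ultimately have in1: "cls (\<Oplus>i\<in>{..<n}. d i \<otimes> b i, t) \<in> N'" using bt by simp
    have "cls (t, \<one>) \<otimes>\<^bsub>L\<^esub> cls (\<Oplus>i\<in>{..<n}. d i \<otimes> b i, t) = cls (t \<otimes> (\<Oplus>i\<in>{..<n}. d i \<otimes> b i), \<one> \<otimes> t)"
      using L_mult sc bt one_S by auto
    also have "\<dots> = cls (\<Oplus>i\<in>{..<n}. d i \<otimes> b i, \<one>)"
      using sc bt one_S by (intro cls_eqI') (auto simp: m_comm)
    finally have "cls (\<Oplus>i\<in>{..<n}. d i \<otimes> b i, \<one>) \<in> N'"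
      using N'smult[OF _ in1, of "cls (t, \<one>)"] L_cls bt one_S by auto
    moreover have "(\<Oplus>i\<in>{..<n}. d i \<otimes> b i) \<in> ?V"
      using lc_in_V[of n c, OF c refl d] bt by auto
    ultimately show "(\<Oplus>i\<in>{..<n}. d i \<otimes> b i) \<in> N" unfolding N_def by auto
  qed
  obtain z where z: "\<forall>i<n. z i \<in> ?V" "\<forall>i<n. z i \<ominus> b i \<in> N"
      "\<forall>d. isrel R n c d \<longrightarrow> (\<Oplus>i\<in>{..<n}. d i \<otimes> z i) = \<zero>"
    using qp_lift[of n c, OF c refl qpV sm _ hr] bt by blast
  have zc: "\<And>i. i < n \<Longrightarrow> z i \<in> carrier R" using z Vc by auto
  define z' where "z' i = cls (z i, t)" for i
  have "\<forall>i<n. z' i \<in> ?V'"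
    using z(1) bt span_L_iff[of n c, OF c] unfolding z'_def by blast
  moreover have "\<forall>i<n. z' i \<ominus>\<^bsub>L\<^esub> y' i \<in> N'"
  proof (intro allI impI)
    fix i assume i: "i < n"
    have h: "cls (z i \<ominus> b i, \<one>) \<in> N'" "z i \<ominus> b i \<in> carrier R"
      using z(2) i bc zc unfolding N_def by auto
    have "z' i \<ominus>\<^bsub>L\<^esub> y' i = cls (z i \<ominus> b i, t)"
      unfolding z'_def using bt i zc bc L_minus_same by auto
    also have "\<dots> = cls (\<one>, t) \<otimes>\<^bsub>L\<^esub> cls (z i \<ominus> b i, \<one>)"
      using L_mult h bt one_S by auto
    finally show "z' i \<ominus>\<^bsub>L\<^esub> y' i \<in> N'"
      using N'smult[OF _ h(1), of "cls (\<one>, t)"] L_cls bt one_S by auto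
  qed
  moreover have "\<forall>r. isrel L n (c' c) r \<longrightarrow> (\<Oplus>\<^bsub>L\<^esub> i\<in>{..<n}. r i \<otimes>\<^bsub>L\<^esub> z' i) = \<zero>\<^bsub>L\<^esub>"
  proof (intro allI impI)
    fix r assume "isrel L n (c' c) r"
    then obtain d s u where dsu: "s \<in> S" "u \<in> S" "\<forall>i<n. d i \<in> carrier R \<and> r i = cls (d i, s)"
      "isrel R n c (\<lambda>i. u \<otimes> d i)" using rel_down[of n c, OF c] by blast
    have dc: "\<And>i. i < n \<Longrightarrow> d i \<in> carrier R" using dsu by auto
    have "(\<Oplus>\<^bsub>L\<^esub> i\<in>{..<n}. r i \<otimes>\<^bsub>L\<^esub> z' i) = (\<Oplus>\<^bsub>L\<^esub> i\<in>{..<n}. cls (d i, s) \<otimes>\<^bsub>L\<^esub> cls (z i, t))"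
      unfolding z'_def using dsu zc bt by (intro Lc.fsum_cong) (auto intro!: L_cls)
    also have "\<dots> = cls (\<Oplus>i\<in>{..<n}. d i \<otimes> z i, s \<otimes> t)"
      using L_lc[of n d z s t] dc zc dsu bt by auto
    also have "\<dots> = \<zero>\<^bsub>L\<^esub>"
    proof -
      have "u \<otimes> (\<Oplus>i\<in>{..<n}. d i \<otimes> z i) = (\<Oplus>i\<in>{..<n}. (u \<otimes> d i) \<otimes> z i)"
        using span_smult[of n z d u] zc dc dsu by auto
      also have "\<dots> = \<zero>" using z(3) dsu by blast
      finally show ?thesis
        using L_cls_zero_iff[of "\<Oplus>i\<in>{..<n}. d i \<otimes> z i" "s \<otimes> t"] dsu S_mult bt dc zc
        by (auto intro!: fsum_closed)
    qed
    finally show "(\<Oplus>\<^bsub>L\<^esub> i\<in>{..<n}. r i \<otimes>\<^bsub>L\<^esub> z' i) = \<zero>\<^bsub>L\<^esub>" .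
  qed
  ultimately show "\<exists>z. (\<forall>i<n. z i \<in> ?V') \<and> (\<forall>i<n. z i \<ominus>\<^bsub>L\<^esub> y' i \<in> N') \<and>
             (\<forall>r. isrel L n (c' c) r \<longrightarrow> (\<Oplus>\<^bsub>L\<^esub> i\<in>{..<n}. r i \<otimes>\<^bsub>L\<^esub> z i) = \<zero>\<^bsub>L\<^esub>)"
    by blast
qed

end

lemma (in cring) minus_plus_cancel: "x \<in> carrier R \<Longrightarrow> y \<in> carrier R \<Longrightarrow> x = (x \<ominus> y) \<oplus> y"
  by algebra

context locP begin

lemma qp_down_local:
  fixes n :: nat and a :: "nat \<Rightarrow> 'a" and m :: nat and g :: "nat \<Rightarrow> nat \<Rightarrow> 'a"
  assumes a: "\<And>i. i < n \<Longrightarrow> a i \<in> carrier R"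
    and qpL: "quasi_projective L (span L n (c' a))"
    and grel: "\<forall>j<m. isrel R n a (g j)"
    and sm: "submod R (span R n a) N" and y: "\<forall>i<n. y i \<in> span R n a"
    and hr: "\<forall>r. isrel R n a r \<longrightarrow> (\<Oplus>i\<in>{..<n}. r i \<otimes> y i) \<in> N"
  shows "\<exists>x\<in>S. \<exists>w. (\<forall>i<n. w i \<in> N) \<and> (\<forall>j<m. (\<Oplus>i\<in>{..<n}. g j i \<otimes> (x \<otimes> y i \<oplus> w i)) = \<zero>)"
proof -
  let ?V = "span R n a" and ?V' = "span L n (c' a)"
  have Vc: "?V \<subseteq> carrier R" using Vc[of n a, OF a refl] .
  have V'c: "?V' \<subseteq> carrier L" using Lc.Vc[of n "c' a", OF c'_carr[of n a, OF a] refl] .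
  have Nc: "N \<subseteq> carrier R" using Nc[OF sm Vc] .
  note N0 = N0[OF sm Vc] and Nadd = Nadd[OF sm Vc] and Nneg = Nneg[OF sm Vc]
    and Nsmult = Nsmult[OF sm Vc]
  have NV: "N \<subseteq> ?V" using sm unfolding submod_def by auto
  have yc: "\<And>i. i < n \<Longrightarrow> y i \<in> carrier R" using y Vc by auto
  define N' where "N' = {cls (v, s) | v s. v \<in> N \<and> s \<in> S}"
  have sm': "submod L ?V' N'" unfolding submod_def
  proof (intro conjI ballI)
    show "N' \<subseteq> ?V'" unfolding N'_def using span_L_iff[of n a, OF a] NV by blast
    show "\<zero>\<^bsub>L\<^esub> \<in> N'" unfolding N'_def L_zero using N0 one_S by blast
  next
    fix x y assume "x \<in> N'" "y \<in> N'"
    then obtain v s v' s' where h: "v \<in> N" "s \<in> S" "x = cls (v, s)" "v' \<in> N" "s' \<in> S" "y = cls (v', s')"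
      unfolding N'_def by blast
    have vc: "v \<in> carrier R" "v' \<in> carrier R" using h Nc by auto
    have "x \<oplus>\<^bsub>L\<^esub> y = cls (v \<otimes> s' \<oplus> v' \<otimes> s, s \<otimes> s')"
      unfolding h(3) h(6) using L_add[OF vc(1) h(2) vc(2) h(5)] .
    moreover have "v \<otimes> s' \<oplus> v' \<otimes> s \<in> N"
    proof -
      have "v \<otimes> s' = s' \<otimes> v" "v' \<otimes> s = s \<otimes> v'" using vc h by (auto simp: m_comm)
      moreover have "s' \<otimes> v \<in> N" "s \<otimes> v' \<in> N" using Nsmult h by auto
      ultimately show ?thesis using Nadd by simp
    qed
    ultimately show "x \<oplus>\<^bsub>L\<^esub> y \<in> N'" unfolding N'_def using S_mult h by blast
  next
    fix x assume "x \<in> N'"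
    then obtain v s where h: "v \<in> N" "s \<in> S" "x = cls (v, s)" unfolding N'_def by blast
    have "\<ominus>\<^bsub>L\<^esub> x = cls (\<ominus> v, s)" using h Nc L_neg by auto
    then show "\<ominus>\<^bsub>L\<^esub> x \<in> N'" unfolding N'_def using h Nneg by blast
  next
    fix r x assume r: "r \<in> carrier L" and "x \<in> N'"
    then obtain v s where h: "v \<in> N" "s \<in> S" "x = cls (v, s)" unfolding N'_def by blast
    obtain e t where et: "e \<in> carrier R" "t \<in> S" "r = cls (e, t)" using r L_E by metis
    have "r \<otimes>\<^bsub>L\<^esub> x = cls (e \<otimes> v, t \<otimes> s)" using h et Nc L_mult by auto
    then show "r \<otimes>\<^bsub>L\<^esub> x \<in> N'" unfolding N'_def using h et Nsmult S_mult by blast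
  qed
  define y' where "y' i = cls (y i, \<one>)" for i
  have y': "\<forall>i<n. y' i \<in> ?V'" unfolding y'_def using span_L_iff[of n a, OF a] y one_S by blast
  have hr': "\<forall>r. isrel L n (c' a) r \<longrightarrow> (\<Oplus>\<^bsub>L\<^esub> i\<in>{..<n}. r i \<otimes>\<^bsub>L\<^esub> y' i) \<in> N'"
  proof (intro allI impI)
    fix r assume "isrel L n (c' a) r"
    then obtain d s u where dsu: "s \<in> S" "u \<in> S" "\<forall>i<n. d i \<in> carrier R \<and> r i = cls (d i, s)"
      "isrel R n a (\<lambda>i. u \<otimes> d i)" using rel_down[of n a, OF a] by blast
    have dc: "\<And>i. i < n \<Longrightarrow> d i \<in> carrier R" using dsu by auto
    have sc: "(\<Oplus>i\<in>{..<n}. d i \<otimes> y i) \<in> carrier R" using dc yc by (auto intro!: fsum_closed)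
    have "(\<Oplus>\<^bsub>L\<^esub> i\<in>{..<n}. r i \<otimes>\<^bsub>L\<^esub> y' i) = (\<Oplus>\<^bsub>L\<^esub> i\<in>{..<n}. cls (d i, s) \<otimes>\<^bsub>L\<^esub> cls (y i, \<one>))"
      unfolding y'_def using dsu yc one_S by (intro Lc.fsum_cong) (auto intro!: L_cls)
    also have "\<dots> = cls (\<Oplus>i\<in>{..<n}. d i \<otimes> y i, s \<otimes> \<one>)"
      using L_lc[of n d y s \<one>] dc yc dsu one_S by auto
    also have "\<dots> = cls (u \<otimes> (\<Oplus>i\<in>{..<n}. d i \<otimes> y i), u \<otimes> s)"
      using cls_scale[of _ s u] sc dsu by auto
    also have "u \<otimes> (\<Oplus>i\<in>{..<n}. d i \<otimes> y i) = (\<Oplus>i\<in>{..<n}. (u \<otimes> d i) \<otimes> y i)"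
      using span_smult[of n y d u] yc dc dsu by auto
    finally show "(\<Oplus>\<^bsub>L\<^esub> i\<in>{..<n}. r i \<otimes>\<^bsub>L\<^esub> y' i) \<in> N'"
      unfolding N'_def using hr dsu S_mult by blast
  qed
  obtain z' where z': "\<forall>i<n. z' i \<in> ?V'" "\<forall>i<n. z' i \<ominus>\<^bsub>L\<^esub> y' i \<in> N'"
      "\<forall>r. isrel L n (c' a) r \<longrightarrow> (\<Oplus>\<^bsub>L\<^esub> i\<in>{..<n}. r i \<otimes>\<^bsub>L\<^esub> z' i) = \<zero>\<^bsub>L\<^esub>"
    using Lc.qp_lift[of n "c' a" ?V', OF c'_carr[of n a, OF a] refl qpL sm' y' hr'] by blast
  have zN: "\<And>i. i < n \<Longrightarrow> \<exists>w s. w \<in> N \<and> s \<in> S \<and> z' i \<ominus>\<^bsub>L\<^esub> y' i = cls (w, s)"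
    using z'(2) unfolding N'_def by blast
  have "\<exists>w s. s \<in> S \<and> (\<forall>i<n. w i \<in> N \<and> z' i \<ominus>\<^bsub>L\<^esub> y' i = cls (w i, s))"
    by (rule common_denom[OF Nc Nsmult zN])
  then obtain w s where ws: "s \<in> S" "\<forall>i<n. w i \<in> N \<and> z' i \<ominus>\<^bsub>L\<^esub> y' i = cls (w i, s)" by blast
  have wc: "\<And>i. i < n \<Longrightarrow> w i \<in> carrier R" using ws Nc by auto
  define X where "X i = s \<otimes> y i \<oplus> w i" for i
  have Xc: "\<And>i. i < n \<Longrightarrow> X i \<in> carrier R" unfolding X_def using yc wc ws by auto
  have z'e: "z' i = cls (X i, s)" if i: "i < n" for i
  proof -
    have "z' i = (z' i \<ominus>\<^bsub>L\<^esub> y' i) \<oplus>\<^bsub>L\<^esub> y' i"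
    proof (rule Lc.minus_plus_cancel)
      show "z' i \<in> carrier L" "y' i \<in> carrier L" using z'(1) V'c y' i by auto
    qed
    also have "\<dots> = cls (w i, s) \<oplus>\<^bsub>L\<^esub> cls (y i, \<one>)" using ws i unfolding y'_def by simp
    also have "\<dots> = cls (w i \<otimes> \<one> \<oplus> y i \<otimes> s, s \<otimes> \<one>)" using L_add wc yc ws one_S i by auto
    also have "\<dots> = cls (X i, s)" unfolding X_def using wc yc ws i by (simp add: a_comm m_comm)
    finally show ?thesis .
  qed
  have "\<forall>j<m. \<exists>u\<in>S. u \<otimes> (\<Oplus>i\<in>{..<n}. g j i \<otimes> X i) = \<zero>"
  proof (intro allI impI)
    fix j assume j: "j < m"
    have rel: "isrel R n a (g j)" using grel j by auto
    then have gc: "\<And>i. i < n \<Longrightarrow> g j i \<in> carrier R" unfolding isrel_def by auto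
    have rl: "isrel L n (c' a) (\<lambda>i. cls (g j i, \<one>))" by (rule rel_up[of n a, OF a rel])
    have "(\<Oplus>\<^bsub>L\<^esub> i\<in>{..<n}. cls (g j i, \<one>) \<otimes>\<^bsub>L\<^esub> z' i) = \<zero>\<^bsub>L\<^esub>"
      using z'(3) rl by blast
    then have "\<zero>\<^bsub>L\<^esub> = (\<Oplus>\<^bsub>L\<^esub> i\<in>{..<n}. cls (g j i, \<one>) \<otimes>\<^bsub>L\<^esub> z' i)" by (rule sym)
    also have "\<dots> = (\<Oplus>\<^bsub>L\<^esub> i\<in>{..<n}. cls (g j i, \<one>) \<otimes>\<^bsub>L\<^esub> cls (X i, s))"
      using z'e gc Xc ws one_S by (intro Lc.fsum_cong) (auto intro!: L_cls)
    also have "\<dots> = cls (\<Oplus>i\<in>{..<n}. g j i \<otimes> X i, \<one> \<otimes> s)"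
      using L_lc[of n "g j" X \<one> s] gc Xc ws one_S by auto
    finally have "cls (\<Oplus>i\<in>{..<n}. g j i \<otimes> X i, s) = \<zero>\<^bsub>L\<^esub>" using ws by simp
    moreover have sc: "(\<Oplus>i\<in>{..<n}. g j i \<otimes> X i) \<in> carrier R"
      using gc Xc by (intro fsum_closed) auto
    ultimately show "\<exists>u\<in>S. u \<otimes> (\<Oplus>i\<in>{..<n}. g j i \<otimes> X i) = \<zero>"
      using L_cls_zero_iff[OF sc ws(1)] by simp
  qed
  then obtain u where u: "u \<in> S" "\<forall>j<m. u \<otimes> (\<Oplus>i\<in>{..<n}. g j i \<otimes> X i) = \<zero>"
  proof -
    have "\<And>j. j < m \<Longrightarrow> (\<Oplus>i\<in>{..<n}. g j i \<otimes> X i) \<in> carrier R"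
      using grel Xc unfolding isrel_def by (intro fsum_closed) auto
    then show ?thesis
      using common_annih[of m "\<lambda>j. \<Oplus>i\<in>{..<n}. g j i \<otimes> X i"] that \<open>\<forall>j<m. \<exists>u\<in>S. _\<close> by blast
  qed
  have "\<forall>i<n. u \<otimes> w i \<in> N" using ws u Nsmult by auto
  moreover have "\<forall>j<m. (\<Oplus>i\<in>{..<n}. g j i \<otimes> ((u \<otimes> s) \<otimes> y i \<oplus> u \<otimes> w i)) = \<zero>"
  proof (intro allI impI)
    fix j assume j: "j < m"
    then have gc: "\<And>i. i < n \<Longrightarrow> g j i \<in> carrier R" using grel unfolding isrel_def by auto
    have uc: "u \<in> carrier R" "s \<in> carrier R" using u ws by auto
    have "(\<Oplus>i\<in>{..<n}. g j i \<otimes> ((u \<otimes> s) \<otimes> y i \<oplus> u \<otimes> w i)) = (\<Oplus>i\<in>{..<n}. u \<otimes> (g j i \<otimes> X i))"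
    proof (rule fsum_cong)
      fix i assume i: "i < n"
      have cc: "g j i \<in> carrier R" "y i \<in> carrier R" "w i \<in> carrier R" using gc yc wc i by auto
      show "g j i \<otimes> ((u \<otimes> s) \<otimes> y i \<oplus> u \<otimes> w i) = u \<otimes> (g j i \<otimes> X i)"
        unfolding X_def using cc uc by algebra
      show "u \<otimes> (g j i \<otimes> X i) \<in> carrier R" using cc uc Xc i by auto
    qed
    also have "\<dots> = u \<otimes> (\<Oplus>i\<in>{..<n}. g j i \<otimes> X i)" using uc gc Xc by (intro fsum_smult) auto
    also have "\<dots> = \<zero>" using u j by auto
    finally show "(\<Oplus>i\<in>{..<n}. g j i \<otimes> ((u \<otimes> s) \<otimes> y i \<oplus> u \<otimes> w i)) = \<zero>" .
  qed
  moreover have "u \<otimes> s \<in> S" using S_mult u ws by auto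
  ultimately show ?thesis
    by (intro bexI[of _ "u \<otimes> s"] exI[of _ "\<lambda>i. u \<otimes> w i"] conjI) auto
qed

end

lemma (in cring) exists_maximal:
  assumes J: "ideal J R" "\<one> \<notin> J"
  shows "\<exists>M. maximalideal M R \<and> J \<subseteq> M"
proof -
  let ?A = "{I. ideal I R \<and> J \<subseteq> I \<and> \<one> \<notin> I}"
  have "\<forall>C\<in>chains ?A. \<exists>U\<in>?A. \<forall>X\<in>C. X \<subseteq> U"
  proof
    fix C assume C: "C \<in> chains ?A"
    show "\<exists>U\<in>?A. \<forall>X\<in>C. X \<subseteq> U"
    proof (cases "C = {}")
      case True then show ?thesis using J by auto
    next
      case False
      have CA: "C \<subseteq> ?A" using chainsD2[OF C] .
      have ch: "\<And>X Y. X \<in> C \<Longrightarrow> Y \<in> C \<Longrightarrow> X \<subseteq> Y \<or> Y \<subseteq> X" using chainsD[OF C] by blast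
      have idl: "\<And>X. X \<in> C \<Longrightarrow> ideal X R" using CA by auto
      have "ideal (\<Union>C) R"
      proof (rule ideal_by_closure)
        show "\<Union>C \<subseteq> carrier R"
          using idl by (meson Sup_least additive_subgroup.a_subset ideal.axioms(1))
        obtain X where "X \<in> C" using False by blast
        moreover have "\<zero> \<in> X" using idl[OF \<open>X \<in> C\<close>] by (simp add: additive_subgroup.zero_closed ideal.axioms(1))
        ultimately show "\<zero> \<in> \<Union>C" by blast
      next
        fix x y assume "x \<in> \<Union>C" "y \<in> \<Union>C"
        then obtain X Y where XY: "X \<in> C" "Y \<in> C" "x \<in> X" "y \<in> Y" by blast
        show "x \<oplus> y \<in> \<Union>C"
        proof (cases "X \<subseteq> Y")
          case True
          then have "x \<oplus> y \<in> Y" using XY idl[of Y] by (meson additive_subgroup.a_closed ideal.axioms(1) subsetD)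
          then show ?thesis using XY by blast
        next
          case False
          then have "Y \<subseteq> X" using ch XY by blast
          then have "x \<oplus> y \<in> X" using XY idl[of X] by (meson additive_subgroup.a_closed ideal.axioms(1) subsetD)
          then show ?thesis using XY by blast
        qed
      next
        fix r x assume "r \<in> carrier R" "x \<in> \<Union>C"
        then obtain X where "X \<in> C" "x \<in> X" "r \<in> carrier R" by blast
        then have "r \<otimes> x \<in> X" using ideal.I_l_closed[OF idl[OF \<open>X \<in> C\<close>]] by simp
        then show "r \<otimes> x \<in> \<Union>C" using \<open>X \<in> C\<close> by blast
      qed
      moreover have "J \<subseteq> \<Union>C" using False CA by auto
      moreover have "\<one> \<notin> \<Union>C" using CA by auto
      ultimately show ?thesis by (intro bexI[of _ "\<Union>C"]) auto
    qed
  qed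
  from Zorn_Lemma2[OF this] obtain M where M: "M \<in> ?A" "\<forall>X\<in>?A. M \<subseteq> X \<longrightarrow> X = M" by blast
  have "maximalideal M R"
  proof (rule maximalidealI)
    show "ideal M R" using M by auto
    show "carrier R \<noteq> M" using M by auto
    fix J' assume J': "ideal J' R" "M \<subseteq> J'" "J' \<subseteq> carrier R"
    show "J' = M \<or> J' = carrier R"
    proof (cases "\<one> \<in> J'")
      case True then show ?thesis using ideal.one_imp_carrier[OF J'(1)] by auto
    next
      case False then show ?thesis using M J' by auto
    qed
  qed
  then show ?thesis using M by auto
qed

lemma (in cring) fsum_swap:
  fixes n m :: nat
  assumes "\<And>j i. j < m \<Longrightarrow> i < n \<Longrightarrow> g j i \<in> carrier R" "\<And>j. j < m \<Longrightarrow> c j \<in> carrier R"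
    "\<And>i. i < n \<Longrightarrow> X i \<in> carrier R"
  shows "(\<Oplus>i\<in>{..<n}. (\<Oplus>j\<in>{..<m}. c j \<otimes> g j i) \<otimes> X i) = (\<Oplus>j\<in>{..<m}. c j \<otimes> (\<Oplus>i\<in>{..<n}. g j i \<otimes> X i))"
  using assms
proof (induction m)
  case 0
  have "(\<Oplus>i\<in>{..<n}. (\<Oplus>j\<in>{..<0}. c j \<otimes> g j i) \<otimes> X i) = (\<Oplus>i\<in>{..<n}. \<zero>)"
    using 0 by (intro fsum_cong) auto
  then show ?case by simp
next
  case (Suc m)
  have T: "\<And>i. i < n \<Longrightarrow> (\<Oplus>j\<in>{..<m}. c j \<otimes> g j i) \<in> carrier R"
    using Suc.prems by (intro fsum_closed) auto
  have "(\<Oplus>i\<in>{..<n}. (\<Oplus>j\<in>{..<Suc m}. c j \<otimes> g j i) \<otimes> X i) =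
        (\<Oplus>i\<in>{..<n}. c m \<otimes> (g m i \<otimes> X i) \<oplus> (\<Oplus>j\<in>{..<m}. c j \<otimes> g j i) \<otimes> X i)"
  proof (rule fsum_cong)
    fix i assume i: "i < n"
    have "(\<Oplus>j\<in>{..<Suc m}. c j \<otimes> g j i) = c m \<otimes> g m i \<oplus> (\<Oplus>j\<in>{..<m}. c j \<otimes> g j i)"
      using Suc.prems i by (intro fsum_Suc) auto
    then show "(\<Oplus>j\<in>{..<Suc m}. c j \<otimes> g j i) \<otimes> X i = c m \<otimes> (g m i \<otimes> X i) \<oplus> (\<Oplus>j\<in>{..<m}. c j \<otimes> g j i) \<otimes> X i"
      using Suc.prems i T[OF i] by (simp add: l_distr m_assoc)
    show "c m \<otimes> (g m i \<otimes> X i) \<oplus> (\<Oplus>j\<in>{..<m}. c j \<otimes> g j i) \<otimes> X i \<in> carrier R"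
      using Suc.prems i T[OF i] by auto
  qed
  also have "\<dots> = (\<Oplus>i\<in>{..<n}. c m \<otimes> (g m i \<otimes> X i)) \<oplus> (\<Oplus>i\<in>{..<n}. (\<Oplus>j\<in>{..<m}. c j \<otimes> g j i) \<otimes> X i)"
    using Suc.prems T by (intro fsum_add) auto
  also have "\<dots> = c m \<otimes> (\<Oplus>i\<in>{..<n}. g m i \<otimes> X i) \<oplus> (\<Oplus>j\<in>{..<m}. c j \<otimes> (\<Oplus>i\<in>{..<n}. g j i \<otimes> X i))"
    using Suc by (subst fsum_smult) auto
  also have "\<dots> = (\<Oplus>j\<in>{..<Suc m}. c j \<otimes> (\<Oplus>i\<in>{..<n}. g j i \<otimes> X i))"
    using Suc.prems by (intro fsum_Suc[symmetric]) (auto intro!: fsum_closed)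
  finally show ?case .
qed

lemma (in cring) main_ltr:
  assumes fqpA: "fqp_ring R" and maxP: "maximalideal P R"
  shows "fqp_ring (localization R P)"
proof -
      interpret locP R P using is_cring maxP by (simp add: locP_def locP_axioms_def)
      show "fqp_ring (localization R P)" unfolding fqp_ring_def
      proof (intro allI impI, elim conjE)
        fix I assume I: "ideal I (localization R P)" "fg_ideal (localization R P) I"
        obtain X where X: "finite X" "X \<subseteq> carrier (localization R P)" "I = Idl\<^bsub>localization R P\<^esub> X"
          using I(2) unfolding fg_ideal_def by blast
        obtain xs where xs: "set xs = X" using finite_list[OF X(1)] by blast
        define n where "n = length xs"
        define x where "x i = xs ! i" for i
        have Xx: "X = x ` {..<n}" unfolding x_def n_def xs[symmetric] by (auto simp: set_conv_nth)
        have xc: "\<forall>i<n. x i \<in> carrier L" using X(2) Xx by auto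
        obtain c t where ct: "t \<in> S" "\<forall>i<n. c i \<in> carrier R \<and> x i = cls (c i, t)"
          using L_denoms[OF xc] by blast
        have cc: "\<And>i. i < n \<Longrightarrow> c i \<in> carrier R" using ct by auto
        have c'c: "\<And>i. i < n \<Longrightarrow> c' c i \<in> carrier L" using c'_carr[of n c, OF cc] by auto
        have ideal_c: "ideal (Idl\<^bsub>L\<^esub> (c' c ` {..<n})) L" using c'c by (intro Lc.genideal_ideal) auto
        have ideal_x: "ideal (Idl\<^bsub>L\<^esub> (x ` {..<n})) L" using xc by (intro Lc.genideal_ideal) auto
        have "Idl\<^bsub>L\<^esub> (x ` {..<n}) = Idl\<^bsub>L\<^esub> (c' c ` {..<n})"
        proof (rule equalityI)
          show "Idl\<^bsub>L\<^esub> (x ` {..<n}) \<subseteq> Idl\<^bsub>L\<^esub> (c' c ` {..<n})"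
          proof (rule Lc.genideal_minimal[OF ideal_c])
            show "x ` {..<n} \<subseteq> Idl\<^bsub>L\<^esub> (c' c ` {..<n})"
            proof
              fix v assume "v \<in> x ` {..<n}"
              then obtain i where i: "i < n" "v = x i" by blast
              have "v = c' c i \<otimes>\<^bsub>L\<^esub> cls (\<one>, t)" using ct i L_mult one_S by simp
              moreover have "c' c i \<in> Idl\<^bsub>L\<^esub> (c' c ` {..<n})"
                using Lc.genideal_self[of "c' c ` {..<n}"] c'c i by auto
              moreover have "cls (\<one>, t) \<in> carrier L" using L_cls ct by auto
              ultimately show "v \<in> Idl\<^bsub>L\<^esub> (c' c ` {..<n})" using ideal.I_r_closed[OF ideal_c] by simp
            qed
          qed
          show "Idl\<^bsub>L\<^esub> (c' c ` {..<n}) \<subseteq> Idl\<^bsub>L\<^esub> (x ` {..<n})"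
          proof (rule Lc.genideal_minimal[OF ideal_x])
            show "c' c ` {..<n} \<subseteq> Idl\<^bsub>L\<^esub> (x ` {..<n})"
            proof
              fix v assume "v \<in> c' c ` {..<n}"
              then obtain i where i: "i < n" "v = c' c i" by blast
              have "x i \<otimes>\<^bsub>L\<^esub> cls (t, \<one>) = cls (c i \<otimes> t, t \<otimes> \<one>)" using ct i L_mult one_S by simp
              also have "\<dots> = cls (c i, \<one>)" using ct i one_S by (intro cls_eqI') auto
              finally have "v = x i \<otimes>\<^bsub>L\<^esub> cls (t, \<one>)" using i by simp
              moreover have "x i \<in> Idl\<^bsub>L\<^esub> (x ` {..<n})"
                using Lc.genideal_self[of "x ` {..<n}"] xc i by auto
              moreover have "cls (t, \<one>) \<in> carrier L" using L_cls ct one_S by auto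
              ultimately show "v \<in> Idl\<^bsub>L\<^esub> (x ` {..<n})" using ideal.I_r_closed[OF ideal_x] by simp
            qed
          qed
        qed
        then have Ieq: "I = span L n (c' c)"
          using X(3) Xx Lc.span_eq_Idl[of n "c' c"] c'c by simp
        have qpV: "quasi_projective R (span R n c)"
        proof -
          have "ideal (span R n c) R" using span_ideal[of n c] cc by simp
          moreover have "fg_ideal R (span R n c)"
            unfolding fg_ideal_def using span_eq_Idl[of n c] cc
            by (intro exI[of _ "c ` {..<n}"]) auto
          ultimately show ?thesis using fqpA unfolding fqp_ring_def by blast
        qed
        show "quasi_projective (localization R P) I" using qp_up[OF cc qpV] Ieq by simp
      qed
qed

lemma (in cring) main_rtl:
  assumes coh: "coherent_ring R" and H: "\<forall>P. maximalideal P R \<longrightarrow> fqp_ring (localization R P)"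
  shows "fqp_ring R"
  unfolding fqp_ring_def
    proof (intro allI impI, elim conjE)
      fix V assume V: "ideal V R" "fg_ideal R V"
      have "fp_ideal R V" using coh V unfolding coherent_ring_def by blast
      then obtain n :: nat and a and m :: nat and g where a: "\<forall>i<n. a i \<in> carrier R"
        and Vspan0: "V = {(\<Oplus>i\<in>{..<n}. r i \<otimes> a i) | r. \<forall>i<n. r i \<in> carrier R}"
        and g1: "\<forall>j<m. \<forall>i<n. g j i \<in> carrier R"
        and g2: "\<forall>j<m. (\<Oplus>i\<in>{..<n}. g j i \<otimes> a i) = \<zero>"
        and gen: "\<forall>r. (\<forall>i<n. r i \<in> carrier R) \<and> (\<Oplus>i\<in>{..<n}. r i \<otimes> a i) = \<zero> \<longrightarrow>
             (\<exists>c. (\<forall>j<m. c j \<in> carrier R) \<and> (\<forall>i<n. r i = (\<Oplus>j\<in>{..<m}. c j \<otimes> g j i)))"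
        unfolding fp_ideal_def by (elim exE conjE) (rule that, assumption+)
      note g = g1 g2
      have ac: "\<And>i. i < n \<Longrightarrow> a i \<in> carrier R" using a by auto
      have Vs: "V = span R n a" using Vspan0 unfolding span_def by simp
      have grel: "\<forall>j<m. isrel R n a (g j)" using g unfolding isrel_def by auto
      have Vc: "V \<subseteq> carrier R" using Vc[of n a, OF ac Vs] .
      show "quasi_projective R V"
      proof (rule lift_qp[of n a V, OF ac Vs])
        fix N y assume sm: "submod R V N" and y: "\<forall>i<n. y i \<in> V"
          and hr: "\<forall>r. isrel R n a r \<longrightarrow> (\<Oplus>i\<in>{..<n}. r i \<otimes> y i) \<in> N"
        have Nc: "N \<subseteq> carrier R" using Nc[OF sm Vc] .
        note N0 = N0[OF sm Vc] and Nadd = Nadd[OF sm Vc] and Nsmult = Nsmult[OF sm Vc]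
        have NV: "N \<subseteq> V" using sm unfolding submod_def by auto
        have yc: "\<And>i. i < n \<Longrightarrow> y i \<in> carrier R" using y Vc by auto
        have gc: "\<And>j i. j < m \<Longrightarrow> i < n \<Longrightarrow> g j i \<in> carrier R" using g by auto
        define J where "J = {x \<in> carrier R. \<exists>w. (\<forall>i<n. w i \<in> N) \<and>
            (\<forall>j<m. (\<Oplus>i\<in>{..<n}. g j i \<otimes> (x \<otimes> y i \<oplus> w i)) = \<zero>)}"
        have Jid: "ideal J R"
        proof (rule ideal_by_closure)
          show "J \<subseteq> carrier R" unfolding J_def by auto
          have "\<forall>j<m. (\<Oplus>i\<in>{..<n}. g j i \<otimes> (\<zero> \<otimes> y i \<oplus> \<zero>)) = \<zero>"
          proof (intro allI impI)
            fix j assume j: "j < m"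
            have "(\<Oplus>i\<in>{..<n}. g j i \<otimes> (\<zero> \<otimes> y i \<oplus> \<zero>)) = (\<Oplus>i\<in>{..<n}. \<zero>)"
              using gc j yc by (intro fsum_cong) auto
            then show "(\<Oplus>i\<in>{..<n}. g j i \<otimes> (\<zero> \<otimes> y i \<oplus> \<zero>)) = \<zero>" by simp
          qed
          then show "\<zero> \<in> J" unfolding J_def using N0 by (intro CollectI conjI exI[of _ "\<lambda>i. \<zero>"]) auto
        next
          fix x x' assume "x \<in> J" "x' \<in> J"
          then obtain w w' where x: "x \<in> carrier R" "\<forall>i<n. w i \<in> N" "\<forall>j<m. (\<Oplus>i\<in>{..<n}. g j i \<otimes> (x \<otimes> y i \<oplus> w i)) = \<zero>"
            and x': "x' \<in> carrier R" "\<forall>i<n. w' i \<in> N" "\<forall>j<m. (\<Oplus>i\<in>{..<n}. g j i \<otimes> (x' \<otimes> y i \<oplus> w' i)) = \<zero>"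
            unfolding J_def by blast
          have "\<forall>j<m. (\<Oplus>i\<in>{..<n}. g j i \<otimes> ((x \<oplus> x') \<otimes> y i \<oplus> (w i \<oplus> w' i))) = \<zero>"
          proof (intro allI impI)
            fix j assume j: "j < m"
            have "(\<Oplus>i\<in>{..<n}. g j i \<otimes> ((x \<oplus> x') \<otimes> y i \<oplus> (w i \<oplus> w' i))) =
                  (\<Oplus>i\<in>{..<n}. g j i \<otimes> (x \<otimes> y i \<oplus> w i) \<oplus> g j i \<otimes> (x' \<otimes> y i \<oplus> w' i))"
            proof (rule fsum_cong)
              fix i assume i: "i < n"
              have cc: "g j i \<in> carrier R" "y i \<in> carrier R" "w i \<in> carrier R" "w' i \<in> carrier R"
                using gc j i yc x x' Nc by auto
              show "g j i \<otimes> ((x \<oplus> x') \<otimes> y i \<oplus> (w i \<oplus> w' i)) = g j i \<otimes> (x \<otimes> y i \<oplus> w i) \<oplus> g j i \<otimes> (x' \<otimes> y i \<oplus> w' i)"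
                using cc x(1) x'(1) by algebra
              show "g j i \<otimes> (x \<otimes> y i \<oplus> w i) \<oplus> g j i \<otimes> (x' \<otimes> y i \<oplus> w' i) \<in> carrier R"
                using cc x(1) x'(1) by auto
            qed
            also have "\<dots> = (\<Oplus>i\<in>{..<n}. g j i \<otimes> (x \<otimes> y i \<oplus> w i)) \<oplus> (\<Oplus>i\<in>{..<n}. g j i \<otimes> (x' \<otimes> y i \<oplus> w' i))"
              using gc j yc x x' Nc by (intro fsum_add) (auto simp: subset_iff)
            also have "\<dots> = \<zero>" using x(3) x'(3) j by simp
            finally show "(\<Oplus>i\<in>{..<n}. g j i \<otimes> ((x \<oplus> x') \<otimes> y i \<oplus> (w i \<oplus> w' i))) = \<zero>" .
          qed
          then show "x \<oplus> x' \<in> J" unfolding J_def using x x' Nadd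
            by (intro CollectI conjI exI[of _ "\<lambda>i. w i \<oplus> w' i"]) auto
        next
          fix r x assume r: "r \<in> carrier R" and "x \<in> J"
          then obtain w where x: "x \<in> carrier R" "\<forall>i<n. w i \<in> N" "\<forall>j<m. (\<Oplus>i\<in>{..<n}. g j i \<otimes> (x \<otimes> y i \<oplus> w i)) = \<zero>"
            unfolding J_def by blast
          have "\<forall>j<m. (\<Oplus>i\<in>{..<n}. g j i \<otimes> ((r \<otimes> x) \<otimes> y i \<oplus> r \<otimes> w i)) = \<zero>"
          proof (intro allI impI)
            fix j assume j: "j < m"
            have "(\<Oplus>i\<in>{..<n}. g j i \<otimes> ((r \<otimes> x) \<otimes> y i \<oplus> r \<otimes> w i)) =
                  (\<Oplus>i\<in>{..<n}. r \<otimes> (g j i \<otimes> (x \<otimes> y i \<oplus> w i)))"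
            proof (rule fsum_cong)
              fix i assume i: "i < n"
              have cc: "g j i \<in> carrier R" "y i \<in> carrier R" "w i \<in> carrier R"
                using gc j i yc x Nc by auto
              show "g j i \<otimes> ((r \<otimes> x) \<otimes> y i \<oplus> r \<otimes> w i) = r \<otimes> (g j i \<otimes> (x \<otimes> y i \<oplus> w i))"
                using cc x(1) r by algebra
              show "r \<otimes> (g j i \<otimes> (x \<otimes> y i \<oplus> w i)) \<in> carrier R"
                using cc x(1) r by auto
            qed
            also have "\<dots> = r \<otimes> (\<Oplus>i\<in>{..<n}. g j i \<otimes> (x \<otimes> y i \<oplus> w i))"
              using gc j yc x Nc r by (intro fsum_smult) (auto simp: subset_iff)
            also have "\<dots> = \<zero>" using x(3) j r by simp
            finally show "(\<Oplus>i\<in>{..<n}. g j i \<otimes> ((r \<otimes> x) \<otimes> y i \<oplus> r \<otimes> w i)) = \<zero>" .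
          qed
          then show "r \<otimes> x \<in> J" unfolding J_def using x r Nsmult
            by (intro CollectI conjI exI[of _ "\<lambda>i. r \<otimes> w i"]) auto
        qed
        have "\<one> \<in> J"
        proof (rule ccontr)
          assume "\<one> \<notin> J"
          then obtain P where P: "maximalideal P R" "J \<subseteq> P" using exists_maximal[OF Jid] by blast
          interpret locP R P using is_cring P(1) by (simp add: locP_def locP_axioms_def)
          have c'c: "\<And>i. i < n \<Longrightarrow> c' a i \<in> carrier L" using c'_carr[of n a, OF ac] by auto
          have qpL: "quasi_projective L (span L n (c' a))"
          proof -
            have "ideal (span L n (c' a)) L" using Lc.span_ideal[of n "c' a"] c'c by simp
            moreover have "fg_ideal L (span L n (c' a))"
              unfolding fg_ideal_def using Lc.span_eq_Idl[of n "c' a"] c'c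
              by (intro exI[of _ "c' a ` {..<n}"]) auto
            ultimately show ?thesis using H P(1) unfolding fqp_ring_def by blast
          qed
          have sm': "submod R (span R n a) N" using sm Vs by simp
          have y': "\<forall>i<n. y i \<in> span R n a" using y Vs by simp
          obtain xx where xx: "xx \<in> S" "\<exists>w. (\<forall>i<n. w i \<in> N) \<and> (\<forall>j<m. (\<Oplus>i\<in>{..<n}. g j i \<otimes> (xx \<otimes> y i \<oplus> w i)) = \<zero>)"
            using qp_down_local[OF ac qpL grel sm' y' hr] by blast
          then have "xx \<in> J" unfolding J_def by auto
          then show False using P(2) xx(1) by auto
        qed
        then obtain w where w: "\<forall>i<n. w i \<in> N" "\<forall>j<m. (\<Oplus>i\<in>{..<n}. g j i \<otimes> (\<one> \<otimes> y i \<oplus> w i)) = \<zero>"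
          unfolding J_def by blast
        have wc: "\<And>i. i < n \<Longrightarrow> w i \<in> carrier R" using w Nc by auto
        define z where "z i = y i \<oplus> w i" for i
        have zc: "\<And>i. i < n \<Longrightarrow> z i \<in> carrier R" unfolding z_def using yc wc by auto
        have "\<forall>i<n. z i \<in> V" unfolding z_def using y w NV Vadd[of n a V, OF ac Vs] by auto
        moreover have "\<forall>i<n. z i \<ominus> y i \<in> N"
        proof (intro allI impI)
          fix i assume i: "i < n"
          have "z i \<ominus> y i = w i" unfolding z_def using yc[OF i] wc[OF i] by algebra
          then show "z i \<ominus> y i \<in> N" using w i by simp
        qed
        moreover have "\<forall>r. isrel R n a r \<longrightarrow> (\<Oplus>i\<in>{..<n}. r i \<otimes> z i) = \<zero>"
        proof (intro allI impI)
          fix r assume "isrel R n a r"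
          then have r: "\<forall>i<n. r i \<in> carrier R" "(\<Oplus>i\<in>{..<n}. r i \<otimes> a i) = \<zero>" unfolding isrel_def by auto
          then obtain c where c: "\<forall>j<m. c j \<in> carrier R" "\<forall>i<n. r i = (\<Oplus>j\<in>{..<m}. c j \<otimes> g j i)"
            using gen by blast
          have gz: "\<forall>j<m. (\<Oplus>i\<in>{..<n}. g j i \<otimes> z i) = \<zero>"
          proof (intro allI impI)
            fix j assume j: "j < m"
            have "(\<Oplus>i\<in>{..<n}. g j i \<otimes> z i) = (\<Oplus>i\<in>{..<n}. g j i \<otimes> (\<one> \<otimes> y i \<oplus> w i))"
              unfolding z_def using gc j yc wc by (intro fsum_cong) auto
            then show "(\<Oplus>i\<in>{..<n}. g j i \<otimes> z i) = \<zero>" using w(2) j by simp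
          qed
          have "(\<Oplus>i\<in>{..<n}. r i \<otimes> z i) = (\<Oplus>i\<in>{..<n}. (\<Oplus>j\<in>{..<m}. c j \<otimes> g j i) \<otimes> z i)"
            using c r zc gc by (intro fsum_cong) (auto intro!: fsum_closed)
          also have "\<dots> = (\<Oplus>j\<in>{..<m}. c j \<otimes> (\<Oplus>i\<in>{..<n}. g j i \<otimes> z i))"
            using c gc zc by (intro fsum_swap) auto
          also have "\<dots> = (\<Oplus>j\<in>{..<m}. \<zero>)"
            using gz c by (intro fsum_cong) auto
          finally show "(\<Oplus>i\<in>{..<n}. r i \<otimes> z i) = \<zero>" by simp
        qed
        ultimately show "\<exists>z. (\<forall>i<n. z i \<in> V) \<and> (\<forall>i<n. z i \<ominus> y i \<in> N) \<and>
             (\<forall>r. isrel R n a r \<longrightarrow> (\<Oplus>i\<in>{..<n}. r i \<otimes> z i) = \<zero>)" by blast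
      qed
    qed

theorem proposition4p4:
  fixes A :: "('a, 'b) ring_scheme"
  assumes "cring A" and "coherent_ring A"
  shows "fqp_ring A \<longleftrightarrow> (\<forall>P. maximalideal P A \<longrightarrow> fqp_ring (localization A P))"
  using cring.main_ltr[OF assms(1)] cring.main_rtl[OF assms] by blast

end
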